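(* Let $p$ be a prime. For integers $n\ge1$, $\mu\ge1$, let $P(n,p^\mu)$ be the probability that a random symmetric $n\times n$ matrix over $\mathbf{Z}_{p^\mu}$ has determinant $\not\equiv 0\pmod{p^\mu}$, and extend this by the conventions $P(0,p^\mu)=1$ for $\mu>0$ and $P(n,p^\mu)=0$ for $\mu\le0$ (all $n\ge0$). Then for all $n\ge 0$ and $\mu\ge 0$, $$P(n+1,p^\mu)\le P(n,p^\mu)\le P(n,p^{\mu+1}).$$
   Context: For a positive integer $m$, $\mathbf{Z}_m=\{1,2,\ldots,m\}$ (viewed as residues mod $m$). A random symmetric $n\times n$ matrix over $\mathbf{Z}_m$ is one whose entries $a_{ij}$, $i\le j$, are chosen independently and uniformly from $\mathbf{Z}_m$, with $a_{ji}=a_{ij}$. *)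

theory Defs
  imports "Jordan_Normal_Form.Determinant"
begin

text \<open>Symmetric n x n integer matrices whose entries are representatives in
  Z_m = {1,...,m} (viewed as residues mod m).\<close>
definition sym_mats :: "nat \<Rightarrow> nat \<Rightarrow> int mat set" where
  "sym_mats n m = {A \<in> carrier_mat n n.
      (\<forall>i<n. \<forall>j<n. A $$ (i,j) \<in> {1..int m} \<and> A $$ (i,j) = A $$ (j,i))}"

definition nonsing_sym_mats :: "nat \<Rightarrow> nat \<Rightarrow> int mat set" where
  "nonsing_sym_mats n m = {A \<in> sym_mats n m. \<not> (int m dvd det A)}"

text \<open>P(n, p^mu): a random symmetric matrix has its n(n+1)/2 entries a_ij (i \<le> j)
  independent uniform in Z_m, so each symmetric matrix has probability
  1 / m^(n(n+1)/2).\<close>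
definition Pdet :: "nat \<Rightarrow> nat \<Rightarrow> nat \<Rightarrow> real" where
  "Pdet n p \<mu> =
     (if \<mu> = 0 then 0
      else if n = 0 then 1
      else real (card (nonsing_sym_mats n (p ^ \<mu>))) / real (p ^ \<mu>) ^ (n * (n + 1) div 2))"

end

theory Submission
  imports Defs "HOL-Number_Theory.Cong"
begin


lemma det_cong:
  fixes X Y :: "int mat"
  assumes X: "X \<in> carrier_mat n n" and Y: "Y \<in> carrier_mat n n"
    and c: "\<And>i j. i < n \<Longrightarrow> j < n \<Longrightarrow> X $$ (i,j) mod q = Y $$ (i,j) mod q"
  shows "det X mod q = det Y mod q"
proof -
  have pr: "(\<Prod>i = 0..<n. X $$ (i, \<sigma> i)) mod q = (\<Prod>i = 0..<n. Y $$ (i, \<sigma> i)) mod q"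
    if "\<sigma> permutes {0..<n}" for \<sigma>
  proof -
    have "(\<Prod>i = 0..<n. X $$ (i, \<sigma> i)) mod q = (\<Prod>i = 0..<n. X $$ (i, \<sigma> i) mod q) mod q"
      by (simp add: mod_prod_eq)
    also have "\<dots> = (\<Prod>i = 0..<n. Y $$ (i, \<sigma> i) mod q) mod q"
      by (rule arg_cong[where f="\<lambda>x. x mod q"], rule prod.cong) (use c permutes_in_image[OF that] in auto)
    also have "\<dots> = (\<Prod>i = 0..<n. Y $$ (i, \<sigma> i)) mod q"
      by (simp add: mod_prod_eq)
    finally show ?thesis .
  qed
  have "det X mod q = (\<Sum>\<sigma>\<in>{\<sigma>. \<sigma> permutes {0..<n}}. (signof \<sigma> * (\<Prod>i = 0..<n. X $$ (i, \<sigma> i))) mod q) mod q"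
    unfolding det_def'[OF X] by (simp add: mod_sum_eq)
  also have "\<dots> = (\<Sum>\<sigma>\<in>{\<sigma>. \<sigma> permutes {0..<n}}. (signof \<sigma> * (\<Prod>i = 0..<n. Y $$ (i, \<sigma> i))) mod q) mod q"
    by (rule arg_cong[where f="\<lambda>x. x mod q"], rule sum.cong) (use pr in \<open>auto intro: mod_mult_cong\<close>)
  also have "\<dots> = det Y mod q"
    unfolding det_def'[OF Y] by (simp add: mod_sum_eq)
  finally show ?thesis .
qed

lemma mult_cong_left:
  fixes X Y Z :: "int mat"
  assumes X: "X \<in> carrier_mat n m" and Y: "Y \<in> carrier_mat n m" and Z: "Z \<in> carrier_mat m k"
    and c: "\<And>i j. i < n \<Longrightarrow> j < m \<Longrightarrow> X $$ (i,j) mod q = Y $$ (i,j) mod q"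
    and ij: "i < n" "j < k"
  shows "(X * Z) $$ (i,j) mod q = (Y * Z) $$ (i,j) mod q"
proof -
  have "(X * Z) $$ (i,j) mod q = (\<Sum>l = 0..<m. (X $$ (i,l) * Z $$ (l,j)) mod q) mod q"
    using X Z ij by (simp add: scalar_prod_def mod_sum_eq)
  also have "\<dots> = (\<Sum>l = 0..<m. (Y $$ (i,l) * Z $$ (l,j)) mod q) mod q"
    by (rule arg_cong[where f="\<lambda>x. x mod q"], rule sum.cong) (use c ij in \<open>auto intro: mod_mult_cong\<close>)
  also have "\<dots> = (Y * Z) $$ (i,j) mod q"
    using Y Z ij by (simp add: scalar_prod_def mod_sum_eq)
  finally show ?thesis .
qed

lemma schur_mod:
  fixes B Ct Cb A Bi :: "int mat"
  assumes B: "B \<in> carrier_mat m m" and Ct: "Ct \<in> carrier_mat m N" and Cb: "Cb \<in> carrier_mat N m"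
    and A: "A \<in> carrier_mat N N" and Bi: "Bi \<in> carrier_mat m m"
    and inv: "\<And>i j. i < m \<Longrightarrow> j < m \<Longrightarrow> (B * Bi) $$ (i,j) mod q = (1\<^sub>m m) $$ (i,j) mod q"
  shows "det (four_block_mat B Ct Cb A) mod q = (det B * det (A - Cb * Bi * Ct)) mod q"
proof -
  define E where "E = four_block_mat (1\<^sub>m m) (- (Bi * Ct)) (0\<^sub>m N m) (1\<^sub>m N)"
  define M where "M = four_block_mat B Ct Cb A"
  define M' where "M' = four_block_mat B (0\<^sub>m m N) Cb (A - Cb * Bi * Ct)"
  have BiCt: "Bi * Ct \<in> carrier_mat m N" using Bi Ct by simp
  have E: "E \<in> carrier_mat (m+N) (m+N)" unfolding E_def by simp
  have M: "M \<in> carrier_mat (m+N) (m+N)" unfolding M_def using B A by simp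
  have M': "M' \<in> carrier_mat (m+N) (m+N)" unfolding M'_def using B A Cb Bi Ct by (intro four_block_carrier_mat) auto
  have dE: "det E = 1" unfolding E_def
    using det_four_block_mat_lower_left_zero[of "1\<^sub>m m" m "- (Bi * Ct)" N "0\<^sub>m N m" "1\<^sub>m N"] BiCt by simp
  have ME: "M * E = four_block_mat (B * 1\<^sub>m m + Ct * 0\<^sub>m N m) (B * (- (Bi * Ct)) + Ct * 1\<^sub>m N)
      (Cb * 1\<^sub>m m + A * 0\<^sub>m N m) (Cb * (- (Bi * Ct)) + A * 1\<^sub>m N)"
    unfolding M_def E_def by (rule mult_four_block_mat[OF B Ct Cb A one_carrier_mat uminus_carrier_mat[OF BiCt] zero_carrier_mat one_carrier_mat])
  have e1: "B * 1\<^sub>m m + Ct * 0\<^sub>m N m = B" using B Ct by auto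
  have e3: "Cb * 1\<^sub>m m + A * 0\<^sub>m N m = Cb" using Cb A by auto
  have e4: "Cb * (- (Bi * Ct)) + A * 1\<^sub>m N = A - Cb * Bi * Ct"
  proof -
    have "Cb * Bi * Ct = Cb * (Bi * Ct)" using Cb Bi Ct by simp
    moreover have X: "Cb * (Bi * Ct) \<in> carrier_mat N N" using Cb Bi Ct by simp
    moreover have "Cb * (- (Bi * Ct)) = - (Cb * (Bi * Ct))" by (rule uminus_mult_right_mat) (use Cb Bi Ct in simp)
    ultimately show ?thesis using A Cb Ct by (intro eq_matI) (auto simp del: index_mult_mat)
  qed
  have e2: "(B * (- (Bi * Ct)) + Ct * 1\<^sub>m N) $$ (i,j) mod q = 0"
    if ij: "i < m" "j < N" for i j
  proof -
    have BB: "B * Bi * Ct \<in> carrier_mat m N" using B Bi Ct by simp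
    have "B * (- (Bi * Ct)) = - (B * (Bi * Ct))" by (rule uminus_mult_right_mat) (use B Bi Ct in simp)
    also have "B * (Bi * Ct) = B * Bi * Ct" using B Bi Ct by simp
    finally have "B * (- (Bi * Ct)) = - (B * Bi * Ct)" .
    hence "(B * (- (Bi * Ct)) + Ct * 1\<^sub>m N) $$ (i,j) = Ct $$ (i,j) - (B * Bi * Ct) $$ (i,j)"
      using ij carrier_matD[OF BB] Ct by simp
    moreover have "(B * Bi * Ct) $$ (i,j) mod q = (1\<^sub>m m * Ct) $$ (i,j) mod q"
      by (rule mult_cong_left[of _ m m _ _ N]) (use B Bi Ct inv ij in auto)
    ultimately show ?thesis using Ct ij by (simp add: mod_diff_cong)
  qed
  have c: "(M * E) $$ (i,j) mod q = M' $$ (i,j) mod q" if ij: "i < m+N" "j < m+N" for i j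
  proof -
    have AC: "A - Cb * Bi * Ct \<in> carrier_mat N N" using A Cb Bi Ct by auto
    note dd = carrier_matD[OF AC] carrier_matD[OF B] carrier_matD[OF Cb]
    show ?thesis
      unfolding ME M'_def e1 e3 e4 using ij e2[of i "j - m"] dd
      by (cases "i < m"; cases "j < m") (simp_all add: index_mat_four_block)
  qed
  have "det M = det (M * E)" using det_mult[OF M E] dE by simp
  hence "det M mod q = det M' mod q" using det_cong[OF _ M' c] M E by auto
  also have "det M' = det B * det (A - Cb * Bi * Ct)" unfolding M'_def
    by (rule det_four_block_mat_upper_right_zero) (use B A Cb Bi Ct in auto)
  finally show ?thesis unfolding M_def .
qed


lemma adj_sym:
  fixes B :: "int mat"
  assumes B: "B \<in> carrier_mat m m" and s: "\<And>i j. i < m \<Longrightarrow> j < m \<Longrightarrow> B $$ (i,j) = B $$ (j,i)"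
    and ij: "i < m" "j < m"
  shows "adj_mat B $$ (i,j) = adj_mat B $$ (j,i)"
proof -
  have "mat_delete B j i = transpose_mat (mat_delete B i j)"
    using B s unfolding mat_delete_def by (intro eq_matI) auto
  hence "det (mat_delete B j i) = det (mat_delete B i j)"
    using det_transpose[OF mat_delete_carrier[OF B]] by simp
  thus ?thesis using B ij unfolding adj_mat_def cofactor_def by (simp add: add.commute)
qed

definition dm :: "nat \<Rightarrow> nat \<Rightarrow> nat \<Rightarrow> nat \<Rightarrow> nat \<Rightarrow> int set" where
  "dm p q n i j = (if i < n \<and> j < n then {0..<int q} else {x \<in> {0..<int q}. int p dvd x})"

definition GG :: "nat \<Rightarrow> nat \<Rightarrow> nat \<Rightarrow> nat \<Rightarrow> bool \<Rightarrow> int mat set" where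
  "GG p q k n b = {M \<in> carrier_mat (n+k) (n+k). (\<forall>i<n+k. \<forall>j<n+k. M $$ (i,j) = M $$ (j,i) \<and> M $$ (i,j) \<in> dm p q n i j)
      \<and> (b \<longrightarrow> \<not> int q dvd det M)}"

lemma finite_mats: "finite {M \<in> carrier_mat N N. \<forall>i<N. \<forall>j<N. M $$ (i,j) \<in> {0..<c::int}}"
proof -
  let ?S = "PiE ({..<N} \<times> {..<N}) (\<lambda>_. {0..<c})"
  have "{M \<in> carrier_mat N N. \<forall>i<N. \<forall>j<N. M $$ (i,j) \<in> {0..<c}} \<subseteq> (\<lambda>f. mat N N f) ` ?S"
  proof
    fix M assume M: "M \<in> {M \<in> carrier_mat N N. \<forall>i<N. \<forall>j<N. M $$ (i,j) \<in> {0..<c}}"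
    have "M = mat N N (restrict (\<lambda>ij. M $$ ij) ({..<N} \<times> {..<N}))"
      using M by (intro eq_matI) auto
    moreover have "restrict (\<lambda>ij. M $$ ij) ({..<N} \<times> {..<N}) \<in> ?S" using M by auto
    ultimately show "M \<in> (\<lambda>f. mat N N f) ` ?S" by blast
  qed
  moreover have "finite ?S" by (intro finite_PiE) auto
  ultimately show ?thesis by (meson finite_imageI finite_subset)
qed

lemma finite_GG: "finite (GG p q k n b)"
proof -
  have "GG p q k n b \<subseteq> {M \<in> carrier_mat (n+k) (n+k). \<forall>i<n+k. \<forall>j<n+k. M $$ (i,j) \<in> {0..<int q}}"
    unfolding GG_def dm_def by (auto split: if_splits)
  thus ?thesis using finite_mats finite_subset by blast
qed

definition Bm :: "int mat \<Rightarrow> nat \<Rightarrow> int mat" where "Bm M0 m = mat m m (\<lambda>(i,j). M0 $$ (i,j))"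
definition Ctm :: "int mat \<Rightarrow> nat \<Rightarrow> nat \<Rightarrow> int mat" where "Ctm M0 m N = mat m N (\<lambda>(i,j). M0 $$ (i,m+j))"
definition Cbm :: "int mat \<Rightarrow> nat \<Rightarrow> nat \<Rightarrow> int mat" where "Cbm M0 m N = mat N m (\<lambda>(i,j). M0 $$ (m+i,j))"
definition fbm :: "int mat \<Rightarrow> nat \<Rightarrow> nat \<Rightarrow> int mat \<Rightarrow> int mat" where
  "fbm M0 m N A = four_block_mat (Bm M0 m) (Ctm M0 m N) (Cbm M0 m N) A"

lemma fbm_carrier: "A \<in> carrier_mat N N \<Longrightarrow> fbm M0 m N A \<in> carrier_mat (m+N) (m+N)"
  unfolding fbm_def Bm_def by simp

lemma fbm_index: assumes A: "A \<in> carrier_mat N N" and ij: "i < m+N" "j < m+N"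
  shows "fbm M0 m N A $$ (i,j) = (if i < m \<or> j < m then M0 $$ (i,j) else A $$ (i-m,j-m))"
  using A ij unfolding fbm_def Bm_def Ctm_def Cbm_def by (auto simp: index_mat_four_block)

lemma fbm_inj: assumes "A \<in> carrier_mat N N" "A' \<in> carrier_mat N N" "fbm M0 m N A = fbm M0 m N A'"
  shows "A = A'"
proof (rule eq_matI)
  fix i j assume ij: "i < dim_row A'" "j < dim_col A'"
  have "A $$ (i,j) = fbm M0 m N A $$ (m+i,m+j)" using assms(1,2) ij by (simp add: fbm_index)
  also have "\<dots> = fbm M0 m N A' $$ (m+i,m+j)" using assms(3) by simp
  also have "\<dots> = A' $$ (i,j)" using assms(1,2) ij by (simp add: fbm_index)
  finally show "A $$ (i,j) = A' $$ (i,j)" .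
qed (use assms in auto)

lemma fib_image:
  assumes M0: "M0 \<in> GG p q k (m+n) False"
  shows "{M \<in> GG p q k (m+n) b. \<forall>i<m. \<forall>j<m+n+k. M $$ (i,j) = M0 $$ (i,j)}
     = fbm M0 m (n+k) ` {A \<in> GG p q k n False. b \<longrightarrow> \<not> int q dvd det (fbm M0 m (n+k) A)}"
    (is "?L = ?R")
proof
  have M0c: "M0 \<in> carrier_mat (m+n+k) (m+n+k)" and M0s: "\<And>i j. i<m+n+k \<Longrightarrow> j<m+n+k \<Longrightarrow> M0 $$ (i,j) = M0 $$ (j,i)"
    and M0d: "\<And>i j. i<m+n+k \<Longrightarrow> j<m+n+k \<Longrightarrow> M0 $$ (i,j) \<in> dm p q (m+n) i j"
    using M0 unfolding GG_def by auto
  show "?L \<subseteq> ?R"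
  proof
    fix M assume M: "M \<in> ?L"
    have Mc: "M \<in> carrier_mat (m+n+k) (m+n+k)" and Ms: "\<And>i j. i<m+n+k \<Longrightarrow> j<m+n+k \<Longrightarrow> M $$ (i,j) = M $$ (j,i)"
      and Md: "\<And>i j. i<m+n+k \<Longrightarrow> j<m+n+k \<Longrightarrow> M $$ (i,j) \<in> dm p q (m+n) i j"
      and Mt: "\<And>i j. i<m \<Longrightarrow> j<m+n+k \<Longrightarrow> M $$ (i,j) = M0 $$ (i,j)"
      and Mb: "b \<longrightarrow> \<not> int q dvd det M"
      using M unfolding GG_def by auto
    define A where "A = mat (n+k) (n+k) (\<lambda>(i,j). M $$ (m+i,m+j))"
    have Ac: "A \<in> carrier_mat (n+k) (n+k)" unfolding A_def by simp
    have eq: "M = fbm M0 m (n+k) A"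
    proof (rule eq_matI)
      fix i j assume ij: "i < dim_row (fbm M0 m (n+k) A)" "j < dim_col (fbm M0 m (n+k) A)"
      hence ij': "i < m+n+k" "j < m+n+k" using fbm_carrier[OF Ac, of M0 m] by auto
      show "M $$ (i,j) = fbm M0 m (n+k) A $$ (i,j)"
      proof (cases "i < m")
        case True then show ?thesis using ij' Mt Ac by (simp add: fbm_index)
      next
        case False
        show ?thesis
        proof (cases "j < m")
          case True
          then show ?thesis using ij' Mt[of j i] Ac False Ms[OF ij'] M0s[OF ij'] by (simp add: fbm_index)
        next
          case False2: False
          then show ?thesis using ij' Ac False unfolding A_def by (simp add: fbm_index)
        qed
      qed
    qed (use Mc fbm_carrier[OF Ac, of M0 m] in auto)
    have "A \<in> GG p q k n False"
    proof -
      have "A $$ (i,j) = A $$ (j,i) \<and> A $$ (i,j) \<in> dm p q n i j" if ij: "i<n+k" "j<n+k" for i j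
        using Ms[of "m+i" "m+j"] Md[of "m+i" "m+j"] ij unfolding A_def dm_def by auto
      thus ?thesis using Ac unfolding GG_def by auto
    qed
    moreover have "b \<longrightarrow> \<not> int q dvd det (fbm M0 m (n+k) A)" using Mb eq by simp
    ultimately show "M \<in> ?R" using eq by blast
  qed
  show "?R \<subseteq> ?L"
  proof
    fix M assume "M \<in> ?R"
    then obtain A where A: "A \<in> GG p q k n False" and Mb: "b \<longrightarrow> \<not> int q dvd det (fbm M0 m (n+k) A)"
      and M: "M = fbm M0 m (n+k) A" by blast
    have Ac: "A \<in> carrier_mat (n+k) (n+k)" and As: "\<And>i j. i<n+k \<Longrightarrow> j<n+k \<Longrightarrow> A $$ (i,j) = A $$ (j,i)"
      and Ad: "\<And>i j. i<n+k \<Longrightarrow> j<n+k \<Longrightarrow> A $$ (i,j) \<in> dm p q n i j"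
      using A unfolding GG_def by auto
    have Mc: "M \<in> carrier_mat (m+n+k) (m+n+k)" using fbm_carrier[OF Ac, of M0 m] M by (simp add: add.assoc)
    have Mi: "\<And>i j. i<m+n+k \<Longrightarrow> j<m+n+k \<Longrightarrow> M $$ (i,j) = (if i < m \<or> j < m then M0 $$ (i,j) else A $$ (i-m,j-m))"
      using fbm_index[OF Ac] M by (simp add: add.assoc)
    have "\<forall>i<m+n+k. \<forall>j<m+n+k. M $$ (i,j) = M $$ (j,i) \<and> M $$ (i,j) \<in> dm p q (m+n) i j"
    proof (intro allI impI conjI)
      fix i j assume ij: "i < m+n+k" "j < m+n+k"
      show "M $$ (i,j) = M $$ (j,i)" using Mi[OF ij] Mi[OF ij(2,1)] M0s[OF ij] As[of "i-m" "j-m"] ij by auto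
      show "M $$ (i,j) \<in> dm p q (m+n) i j"
      proof (cases "i < m \<or> j < m")
        case True then show ?thesis using Mi[OF ij] M0d[OF ij] by simp
      next
        case False
        then have "A $$ (i-m,j-m) \<in> dm p q n (i-m) (j-m)" using Ad ij by auto
        then show ?thesis using Mi[OF ij] False unfolding dm_def by (auto split: if_splits)
      qed
    qed
    moreover have "\<forall>i<m. \<forall>j<m+n+k. M $$ (i,j) = M0 $$ (i,j)" using Mi by auto
    ultimately show "M \<in> ?L" using Mc Mb M unfolding GG_def by auto
  qed
qed

lemma GG_facts:
  assumes "M0 \<in> GG p q k n b"
  shows "M0 \<in> carrier_mat (n+k) (n+k)" "\<And>i j. i<n+k \<Longrightarrow> j<n+k \<Longrightarrow> M0 $$ (i,j) = M0 $$ (j,i)"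
    "\<And>i j. i<n+k \<Longrightarrow> j<n+k \<Longrightarrow> M0 $$ (i,j) \<in> dm p q n i j"
    "b \<Longrightarrow> \<not> int q dvd det M0"
  using assms unfolding GG_def by auto

lemma T_sym:
  fixes Bi :: "int mat"
  assumes M0: "M0 \<in> GG p q k (m+n) False" and Bi: "Bi \<in> carrier_mat m m"
    and Bis: "\<And>i j. i<m \<Longrightarrow> j<m \<Longrightarrow> Bi $$ (i,j) = Bi $$ (j,i)"
    and ij: "i < n+k" "j < n+k"
  shows "(Cbm M0 m (n+k) * Bi * Ctm M0 m (n+k)) $$ (i,j) = (Cbm M0 m (n+k) * Bi * Ctm M0 m (n+k)) $$ (j,i)"
proof -
  let ?Cb = "Cbm M0 m (n+k)" and ?Ct = "Ctm M0 m (n+k)"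
  note s = GG_facts(2)[OF M0]
  have Cb: "?Cb \<in> carrier_mat (n+k) m" and Ct: "?Ct \<in> carrier_mat m (n+k)" unfolding Cbm_def Ctm_def by auto
  have tCt: "transpose_mat ?Ct = ?Cb" unfolding Cbm_def Ctm_def by (intro eq_matI) (auto intro: s)
  have tCb: "transpose_mat ?Cb = ?Ct" unfolding Cbm_def Ctm_def by (intro eq_matI) (auto intro: s)
  have tBi: "transpose_mat Bi = Bi" using Bi Bis by (intro eq_matI) auto
  have "transpose_mat (?Cb * Bi * ?Ct) = transpose_mat ?Ct * transpose_mat (?Cb * Bi)"
    by (rule transpose_mult[of _ "n+k" m]) (use Cb Bi Ct in auto)
  also have "transpose_mat (?Cb * Bi) = transpose_mat Bi * transpose_mat ?Cb"
    by (rule transpose_mult[of _ "n+k" m]) (use Cb Bi in auto)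
  finally have "transpose_mat (?Cb * Bi * ?Ct) = ?Cb * (Bi * ?Ct)" unfolding tCt tCb tBi .
  also have "\<dots> = ?Cb * Bi * ?Ct" using Cb Bi Ct by simp
  finally have e: "transpose_mat (?Cb * Bi * ?Ct) = ?Cb * Bi * ?Ct" .
  have "(?Cb * Bi * ?Ct) $$ (i,j) = transpose_mat (?Cb * Bi * ?Ct) $$ (i,j)" unfolding e ..
  also have "\<dots> = (?Cb * Bi * ?Ct) $$ (j,i)" using ij Cb Ct Bi by simp
  finally show ?thesis .
qed

lemma T_dvd:
  fixes Bi :: "int mat"
  assumes M0: "M0 \<in> GG p q k (m+n) False" and Bi: "Bi \<in> carrier_mat m m"
    and ij: "i < n+k" "j < n+k" and c: "\<not> (i < n \<and> j < n)"
  shows "int p dvd (Cbm M0 m (n+k) * Bi * Ctm M0 m (n+k)) $$ (i,j)"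
proof -
  let ?Cb = "Cbm M0 m (n+k)" and ?Ct = "Ctm M0 m (n+k)"
  note d = GG_facts(3)[OF M0]
  have Cb: "?Cb \<in> carrier_mat (n+k) m" and Ct: "?Ct \<in> carrier_mat m (n+k)" unfolding Cbm_def Ctm_def by auto
  have e: "(?Cb * Bi * ?Ct) $$ (i,j) = (\<Sum>l = 0..<m. (?Cb * Bi) $$ (i,l) * ?Ct $$ (l,j))"
    using Cb Bi Ct ij by (simp add: scalar_prod_def del: assoc_mult_mat)
  show ?thesis
  proof (cases "i < n")
    case True
    hence jn: "\<not> j < n" using c by simp
    have "int p dvd ?Ct $$ (l,j)" if "l < m" for l
      using d[of l "m+j"] that ij jn unfolding Ctm_def dm_def by auto
    thus ?thesis unfolding e by (intro dvd_sum) auto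
  next
    case False
    have "int p dvd (?Cb * Bi) $$ (i,l)" if "l < m" for l
    proof -
      have "(?Cb * Bi) $$ (i,l) = (\<Sum>l' = 0..<m. ?Cb $$ (i,l') * Bi $$ (l',l))"
        using Cb Bi ij that by (simp add: scalar_prod_def)
      moreover have "int p dvd ?Cb $$ (i,l')" if "l' < m" for l'
        using d[of "m+i" l'] that ij False unfolding Cbm_def dm_def by auto
      ultimately show ?thesis by (auto intro: dvd_sum)
    qed
    thus ?thesis unfolding e by (intro dvd_sum) auto
  qed
qed

lemma mod_dvd_iff_eq: "(x::int) mod q = y mod q \<Longrightarrow> (q dvd x \<longleftrightarrow> q dvd y)"
  by (metis dvd_eq_mod_eq_0)

lemma fib_card:
  assumes pr: "prime p" and q: "q = p^\<mu>" "\<mu> \<ge> 1" and M0: "M0 \<in> GG p q k (m+n) False"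
    and cop: "b \<Longrightarrow> \<not> int p dvd det (Bm M0 m)"
  shows "card {M \<in> GG p q k (m+n) b. \<forall>i<m. \<forall>j<m+n+k. M $$ (i,j) = M0 $$ (i,j)} = card (GG p q k n b)"
proof -
  let ?N = "n+k"
  let ?f = "fbm M0 m ?N"
  define X where "X = {A \<in> GG p q k n False. b \<longrightarrow> \<not> int q dvd det (?f A)}"
  have "card {M \<in> GG p q k (m+n) b. \<forall>i<m. \<forall>j<m+n+k. M $$ (i,j) = M0 $$ (i,j)} = card (?f ` X)"
    unfolding fib_image[OF M0] X_def ..
  also have "\<dots> = card X"
  proof (rule card_image, rule inj_onI)
    fix A A' assume "A \<in> X" "A' \<in> X" "?f A = ?f A'"
    thus "A = A'" using fbm_inj[of A ?N A' M0 m] unfolding X_def GG_def by auto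
  qed
  also have "card X = card (GG p q k n b)"
  proof (cases b)
    case False
    then show ?thesis unfolding X_def by simp
  next
    case True
    let ?B = "Bm M0 m" and ?Cb = "Cbm M0 m ?N" and ?Ct = "Ctm M0 m ?N"
    have qpos: "int q > 0" using q pr prime_gt_0_nat by simp
    have pq: "int p dvd int q" using q by simp
    have B: "?B \<in> carrier_mat m m" and Cb: "?Cb \<in> carrier_mat ?N m" and Ct: "?Ct \<in> carrier_mat m ?N"
      unfolding Bm_def Cbm_def Ctm_def by auto
    have "coprime (int p) (det ?B)" using cop[OF True] pr by (intro prime_imp_coprime) auto
    hence "coprime (det ?B) (int p ^ \<mu>)" by (simp add: coprime_commute)
    hence cq: "coprime (det ?B) (int q)" using q by simp
    then obtain u where u: "[det ?B * u = 1] (mod int q)" using cong_solve_coprime_int by blast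
    define Bi where "Bi = u \<cdot>\<^sub>m adj_mat ?B"
    have Bi: "Bi \<in> carrier_mat m m" unfolding Bi_def using adj_mat(1)[OF B] by simp
    have Bis: "Bi $$ (i,j) = Bi $$ (j,i)" if "i<m" "j<m" for i j
      unfolding Bi_def using adj_sym[OF B _ that] adj_mat(1)[OF B] that GG_facts(2)[OF M0]
      by (auto simp: Bm_def)
    have inv: "(?B * Bi) $$ (i,j) mod int q = 1\<^sub>m m $$ (i,j) mod int q" if "i<m" "j<m" for i j
    proof -
      have "?B * Bi = u \<cdot>\<^sub>m (det ?B \<cdot>\<^sub>m 1\<^sub>m m)" unfolding Bi_def
        using mult_smult_distrib[OF B adj_mat(1)[OF B]] adj_mat(2)[OF B] by simp
      thus ?thesis using that u unfolding cong_def by (auto simp: mult.commute)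
    qed
    define T where "T = ?Cb * Bi * ?Ct"
    have T: "T \<in> carrier_mat ?N ?N" unfolding T_def using Cb Bi Ct by simp
    have Ts: "\<And>i j. i<?N \<Longrightarrow> j<?N \<Longrightarrow> T $$ (i,j) = T $$ (j,i)"
      unfolding T_def by (rule T_sym[OF M0 Bi Bis])
    have Td: "\<And>i j. i<?N \<Longrightarrow> j<?N \<Longrightarrow> \<not> (i < n \<and> j < n) \<Longrightarrow> int p dvd T $$ (i,j)"
      unfolding T_def by (rule T_dvd[OF M0 Bi])
    have schur: "det (?f A) mod int q = (det ?B * det (A - T)) mod int q" if "A \<in> carrier_mat ?N ?N" for A
      unfolding fbm_def T_def by (rule schur_mod[OF B Ct Cb that Bi inv])
    define \<tau> where "\<tau> A = mat ?N ?N (\<lambda>(i,j). (A $$ (i,j) - T $$ (i,j)) mod int q)" for A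
    define \<tau>' where "\<tau>' S = mat ?N ?N (\<lambda>(i,j). (S $$ (i,j) + T $$ (i,j)) mod int q)" for S
    have key: "int q dvd det (?f A) \<longleftrightarrow> int q dvd det (\<tau> A)" if A: "A \<in> carrier_mat ?N ?N" for A
    proof -
      have "det (A - T) mod int q = det (\<tau> A) mod int q"
        by (rule det_cong[of _ ?N]) (use A T in \<open>auto simp: \<tau>_def\<close>)
      hence "(det ?B * det (A - T)) mod int q = (det ?B * det (\<tau> A)) mod int q"
        by (metis mod_mult_right_eq)
      hence "int q dvd det (?f A) \<longleftrightarrow> int q dvd det ?B * det (\<tau> A)"
        using schur[OF A] by (intro mod_dvd_iff_eq) simp
      also have "\<dots> \<longleftrightarrow> int q dvd det (\<tau> A)"
        using cq by (simp add: coprime_commute coprime_dvd_mult_right_iff)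
      finally show ?thesis .
    qed
    have memb: "\<tau>' S \<in> carrier_mat ?N ?N \<and> (\<forall>i<?N. \<forall>j<?N. \<tau>' S $$ (i,j) = \<tau>' S $$ (j,i) \<and> \<tau>' S $$ (i,j) \<in> dm p q n i j)"
      if S: "S \<in> GG p q k n True" for S
    proof -
      note Sf = GG_facts[OF S]
      show ?thesis
      proof (intro conjI allI impI)
        fix i j assume ij: "i < ?N" "j < ?N"
        show "\<tau>' S $$ (i,j) = \<tau>' S $$ (j,i)" unfolding \<tau>'_def using ij Sf(2) Ts by simp
        show "\<tau>' S $$ (i,j) \<in> dm p q n i j"
          unfolding \<tau>'_def using ij Sf(3)[OF ij] Td[OF ij] qpos pq
          by (auto simp: dm_def dvd_mod_iff split: if_splits)
      qed (simp add: \<tau>'_def)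
    qed
    have memt: "\<tau> A \<in> carrier_mat ?N ?N \<and> (\<forall>i<?N. \<forall>j<?N. \<tau> A $$ (i,j) = \<tau> A $$ (j,i) \<and> \<tau> A $$ (i,j) \<in> dm p q n i j)"
      if A: "A \<in> GG p q k n False" for A
    proof -
      note Af = GG_facts[OF A]
      show ?thesis
      proof (intro conjI allI impI)
        fix i j assume ij: "i < ?N" "j < ?N"
        show "\<tau> A $$ (i,j) = \<tau> A $$ (j,i)" unfolding \<tau>_def using ij Af(2) Ts by simp
        show "\<tau> A $$ (i,j) \<in> dm p q n i j"
          unfolding \<tau>_def using ij Af(3)[OF ij] Td[OF ij] qpos pq
          by (auto simp: dm_def dvd_mod_iff split: if_splits)
      qed (simp add: \<tau>_def)
    qed
    have "bij_betw \<tau> X (GG p q k n True)"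
    proof (rule bij_betw_byWitness[where f'=\<tau>'])
      show "\<forall>a\<in>X. \<tau>' (\<tau> a) = a"
      proof
        fix A assume "A \<in> X"
        hence A: "A \<in> GG p q k n False" unfolding X_def by simp
        note Af = GG_facts[OF A]
        show "\<tau>' (\<tau> A) = A"
        proof (rule eq_matI)
          fix i j assume "i < dim_row A" "j < dim_col A"
          hence ij: "i < ?N" "j < ?N" using Af(1) by auto
          have "A $$ (i,j) \<in> {0..<int q}" using Af(3)[OF ij] unfolding dm_def by (auto split: if_splits)
          thus "\<tau>' (\<tau> A) $$ (i,j) = A $$ (i,j)" unfolding \<tau>'_def \<tau>_def using ij
            by (simp add: mod_add_left_eq)
        qed (use Af(1) in \<open>auto simp: \<tau>'_def\<close>)
      qed
      show "\<forall>a\<in>GG p q k n True. \<tau> (\<tau>' a) = a"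
      proof
        fix S assume S: "S \<in> GG p q k n True"
        note Sf = GG_facts[OF S]
        show "\<tau> (\<tau>' S) = S"
        proof (rule eq_matI)
          fix i j assume "i < dim_row S" "j < dim_col S"
          hence ij: "i < ?N" "j < ?N" using Sf(1) by auto
          have "S $$ (i,j) \<in> {0..<int q}" using Sf(3)[OF ij] unfolding dm_def by (auto split: if_splits)
          thus "\<tau> (\<tau>' S) $$ (i,j) = S $$ (i,j)" unfolding \<tau>'_def \<tau>_def using ij
            by (simp add: mod_diff_left_eq)
        qed (use Sf(1) in \<open>auto simp: \<tau>_def\<close>)
      qed
      show "\<tau> ` X \<subseteq> GG p q k n True"
      proof
        fix S assume "S \<in> \<tau> ` X"
        then obtain A where A: "A \<in> X" and S: "S = \<tau> A" by blast
        have A1: "A \<in> GG p q k n False" and A2: "\<not> int q dvd det (?f A)" using A True unfolding X_def by auto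
        show "S \<in> GG p q k n True" unfolding S GG_def
          using memt[OF A1] key[OF GG_facts(1)[OF A1]] A2 by auto
      qed
      show "\<tau>' ` GG p q k n True \<subseteq> X"
      proof
        fix A assume "A \<in> \<tau>' ` GG p q k n True"
        then obtain S where S: "S \<in> GG p q k n True" and A: "A = \<tau>' S" by blast
        note Sf = GG_facts[OF S]
        have mA: "A \<in> GG p q k n False" unfolding A GG_def using memb[OF S] by auto
        have "\<tau> A = S"
        proof (rule eq_matI)
          fix i j assume "i < dim_row S" "j < dim_col S"
          hence ij: "i < ?N" "j < ?N" using Sf(1) by auto
          have "S $$ (i,j) \<in> {0..<int q}" using Sf(3)[OF ij] unfolding dm_def by (auto split: if_splits)
          thus "\<tau> A $$ (i,j) = S $$ (i,j)" unfolding A \<tau>'_def \<tau>_def using ij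
            by (simp add: mod_diff_left_eq)
        qed (use Sf(1) in \<open>auto simp: \<tau>_def\<close>)
        hence "\<not> int q dvd det (?f A)" using key[OF GG_facts(1)[OF mA]] Sf(4) by simp
        thus "A \<in> X" unfolding X_def using mA by simp
      qed
    qed
    thus ?thesis using True by (simp add: bij_betw_same_card)
  qed
  finally show ?thesis .
qed


lemma det_perm_sym:
  fixes A :: "int mat"
  assumes A: "A \<in> carrier_mat N N" and s: "\<sigma> permutes {0..<N}"
  shows "det (mat N N (\<lambda>(i,j). A $$ (\<sigma> i, \<sigma> j))) = det A"
proof -
  define B where "B = mat N N (\<lambda>(i,j). A $$ (\<sigma> i, j))"
  have B: "B \<in> carrier_mat N N" unfolding B_def by simp
  have dB: "det B = signof \<sigma> * det A" unfolding B_def by (rule det_permute_rows[OF A s])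
  have "mat N N (\<lambda>(i,j). A $$ (\<sigma> i, \<sigma> j)) = transpose_mat (mat N N (\<lambda>(i,j). transpose_mat B $$ (\<sigma> i, j)))"
    using s unfolding B_def by (intro eq_matI) (auto simp: permutes_in_image)
  hence "det (mat N N (\<lambda>(i,j). A $$ (\<sigma> i, \<sigma> j))) = det (mat N N (\<lambda>(i,j). transpose_mat B $$ (\<sigma> i, j)))"
    using det_transpose[of "mat N N (\<lambda>(i,j). transpose_mat B $$ (\<sigma> i, j))" N] by simp
  also have "\<dots> = signof \<sigma> * det (transpose_mat B)" by (rule det_permute_rows[OF _ s]) (use B in simp)
  also have "\<dots> = signof \<sigma> * signof \<sigma> * det A" using dB det_transpose[OF B] by simp
  also have "signof \<sigma> * signof \<sigma> = (1::int)" by (cases \<sigma> rule: sign_cases) auto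
  finally show ?thesis by simp
qed

lemma card_fibers:
  assumes "finite A" "g ` A \<subseteq> S" "finite S"
  shows "card A = (\<Sum>s\<in>S. card {a\<in>A. g a = s})"
proof -
  have "A = (\<Union>s\<in>S. {a\<in>A. g a = s})" using assms(2) by auto
  hence "card A = card (\<Union>s\<in>S. {a\<in>A. g a = s})" by simp
  also have "\<dots> = (\<Sum>s\<in>S. card {a\<in>A. g a = s})"
    by (rule card_UN_disjoint) (use assms in auto)
  finally show ?thesis .
qed

definition bord :: "nat \<Rightarrow> nat \<Rightarrow> (nat \<Rightarrow> nat \<Rightarrow> int) \<Rightarrow> int mat" where
  "bord m N t = mat N N (\<lambda>(i,j). if i < m then t i j else if j < m then t j i else 0)"

lemma dm_sym: "dm p q n i j = dm p q n j i" unfolding dm_def by auto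

lemma bord_GG:
  assumes q: "q > 0" and ts: "\<And>i j. i<m \<Longrightarrow> j<m \<Longrightarrow> t i j = t j i"
    and td: "\<And>i j. i<m \<Longrightarrow> j<m+n+k \<Longrightarrow> t i j \<in> dm p q (m+n) i j"
  shows "bord m (m+n+k) t \<in> GG p q k (m+n) False"
proof -
  have "0 \<in> dm p q (m+n) i j" for i j using q unfolding dm_def by auto
  moreover have "t j i \<in> dm p q (m+n) i j" if "j < m" "i < m+n+k" for i j
    using td[of j i] that dm_sym[of p q "m+n" i j] by simp
  ultimately show ?thesis unfolding GG_def bord_def using ts td by auto
qed

lemma bord_agree: assumes "m \<le> N" shows
  "(\<forall>i<m. \<forall>j<N. M $$ (i,j) = bord m N t $$ (i,j)) \<longleftrightarrow> (\<forall>i<m. \<forall>j<N. M $$ (i,j) = t i j)"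
proof -
  show ?thesis unfolding bord_def using assms by auto
qed

lemma Bm_bord: "m \<le> N \<Longrightarrow> Bm (bord m N t) m = mat m m (\<lambda>(i,j). t i j)"
  unfolding Bm_def bord_def by (intro eq_matI) auto

lemma det_2: "det (mat 2 2 f) = f (0,0) * f (1,1) - f (0,1) * f (1,0)"
proof -
  have c: "mat 2 2 f \<in> carrier_mat 2 2" by simp
  have "det (mat 2 2 f) = (\<Sum>j<2. mat 2 2 f $$ (0,j) * cofactor (mat 2 2 f) 0 j)"
    by (rule laplace_expansion_row[OF c]) simp
  also have "\<dots> = f (0,0) * cofactor (mat 2 2 f) 0 0 + f (0,1) * cofactor (mat 2 2 f) 0 1"
    by (simp add: numeral_2_eq_2)
  also have "cofactor (mat 2 2 f) 0 0 = f (1,1)"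
    unfolding cofactor_def by (subst det_single) (auto simp: mat_delete_def)
  also have "cofactor (mat 2 2 f) 0 1 = - f (1,0)"
    unfolding cofactor_def by (subst det_single) (auto simp: mat_delete_def)
  finally show ?thesis by simp
qed

definition rel :: "(nat \<Rightarrow> nat) \<Rightarrow> nat \<Rightarrow> int mat \<Rightarrow> int mat" where
  "rel \<sigma> N M = mat N N (\<lambda>(i,j). M $$ (\<sigma> i, \<sigma> j))"

lemma relabel_card:
  assumes s1: "\<And>i. i < N \<Longrightarrow> \<sigma> i < N" and s2: "\<And>i. i < N \<Longrightarrow> \<sigma>' i < N"
    and inv1: "\<And>i. i < N \<Longrightarrow> \<sigma> (\<sigma>' i) = i" and inv2: "\<And>i. i < N \<Longrightarrow> \<sigma>' (\<sigma> i) = i"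
    and X: "X \<subseteq> carrier_mat N N" and Y: "Y \<subseteq> carrier_mat N N"
    and XY: "\<And>M. M \<in> X \<Longrightarrow> rel \<sigma> N M \<in> Y" and YX: "\<And>M. M \<in> Y \<Longrightarrow> rel \<sigma>' N M \<in> X"
  shows "card X = card Y"
proof (rule bij_betw_same_card, rule bij_betw_byWitness[where f' = "rel \<sigma>' N"])
  show "\<forall>a\<in>X. rel \<sigma>' N (rel \<sigma> N a) = a"
  proof
    fix M assume "M \<in> X" hence M: "M \<in> carrier_mat N N" using X by auto
    show "rel \<sigma>' N (rel \<sigma> N M) = M" unfolding rel_def using M s2 inv1 by (intro eq_matI) auto
  qed
  show "\<forall>a\<in>Y. rel \<sigma> N (rel \<sigma>' N a) = a"
  proof
    fix M assume "M \<in> Y" hence M: "M \<in> carrier_mat N N" using Y by auto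
    show "rel \<sigma> N (rel \<sigma>' N M) = M" unfolding rel_def using M s1 inv2 by (intro eq_matI) auto
  qed
qed (use XY YX in auto)

lemma perm_of_inv:
  fixes \<sigma> \<sigma>' :: "nat \<Rightarrow> nat"
  assumes s1: "\<And>i. i < N \<Longrightarrow> \<sigma> i < N" and s2: "\<And>i. i < N \<Longrightarrow> \<sigma>' i < N"
    and inv1: "\<And>i. i < N \<Longrightarrow> \<sigma> (\<sigma>' i) = i" and inv2: "\<And>i. i < N \<Longrightarrow> \<sigma>' (\<sigma> i) = i"
    and out: "\<And>i. i \<ge> N \<Longrightarrow> \<sigma> i = i"
  shows "\<sigma> permutes {0..<N}"
proof (rule bij_imp_permutes)
  show "bij_betw \<sigma> {0..<N} {0..<N}"
    by (rule bij_betw_byWitness[where f'=\<sigma>']) (use assms in auto)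
qed (use out in auto)

lemma rel_det: assumes "\<sigma> permutes {0..<N}" "M \<in> carrier_mat N N" shows "det (rel \<sigma> N M) = det M"
  unfolding rel_def by (rule det_perm_sym[OF assms(2,1)])

definition Pq :: "nat \<Rightarrow> nat \<Rightarrow> int set" where "Pq p q = {x \<in> {0..<int q}. int p dvd x}"
definition rowv :: "nat \<Rightarrow> int mat \<Rightarrow> nat \<Rightarrow> nat \<Rightarrow> int" where "rowv i M N = restrict (\<lambda>j. M $$ (i,j)) {..<N}"
definition Rows :: "nat \<Rightarrow> nat \<Rightarrow> nat \<Rightarrow> nat \<Rightarrow> (nat \<Rightarrow> int) set" where
  "Rows p q n k = PiE {..<Suc n + k} (\<lambda>j. dm p q (Suc n) 0 j)"

lemma rowv_eq: "r \<in> PiE {..<N} D \<Longrightarrow> rowv i M N = r \<longleftrightarrow> (\<forall>j<N. M $$ (i,j) = r j)"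
  unfolding rowv_def by (auto simp: PiE_def extensional_def restrict_def fun_eq_iff)

lemma rowv_Rows: "M \<in> GG p q k (Suc n) b \<Longrightarrow> rowv 0 M (Suc n + k) \<in> Rows p q n k"
  unfolding rowv_def Rows_def GG_def by auto

lemma fiberA:
  assumes pr: "prime p" and q: "q = p^\<mu>" "\<mu> \<ge> 1" and r: "r \<in> Rows p q n k"
    and cop: "b \<Longrightarrow> \<not> int p dvd r 0"
  shows "card {M \<in> GG p q k (Suc n) b. rowv 0 M (Suc n + k) = r} = card (GG p q k n b)"
proof -
  let ?t = "\<lambda>(i::nat) j. r j"
  let ?M0 = "bord 1 (1+n+k) ?t"
  have qpos: "q > 0" using q pr prime_gt_0_nat by simp
  have r': "\<And>j. j < 1+n+k \<Longrightarrow> r j \<in> dm p q (1+n) 0 j" using r unfolding Rows_def by auto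
  have M0: "?M0 \<in> GG p q k (1+n) False" by (rule bord_GG[OF qpos]) (use r' in auto)
  have "{M \<in> GG p q k (Suc n) b. rowv 0 M (Suc n + k) = r}
      = {M \<in> GG p q k (1+n) b. \<forall>i<1. \<forall>j<1+n+k. M $$ (i,j) = ?M0 $$ (i,j)}"
  proof -
    have "rowv 0 M (Suc n + k) = r \<longleftrightarrow> (\<forall>i<1. \<forall>j<1+n+k. M $$ (i,j) = ?M0 $$ (i,j))" for M
      using rowv_eq[OF r[unfolded Rows_def], of 0 M] bord_agree[of 1 "1+n+k" M ?t] by simp
    thus ?thesis by simp
  qed
  also have "card \<dots> = card (GG p q k n b)"
  proof (rule fib_card[OF pr q M0])
    assume b
    have "det (Bm ?M0 1) = r 0" by (simp add: Bm_bord det_single)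
    thus "\<not> int p dvd det (Bm ?M0 1)" using cop[OF \<open>b\<close>] by simp
  qed
  finally show ?thesis .
qed

lemma fiberC:
  assumes qpos: "q > 0"
  shows "card {M \<in> GG p q k (Suc n) b. rowv 0 M (Suc n + k) \<in> PiE {..<Suc n + k} (\<lambda>_. Pq p q)}
       = card (GG p q (Suc k) n b)"
proof -
  let ?N = "Suc n + k"
  define \<rho> where "\<rho> i = (if i < n then Suc i else if i = n then 0 else i)" for i
  define \<rho>' where "\<rho>' i = (if i = 0 then n else if i \<le> n then i - 1 else i)" for i
  have r1: "\<And>i. i < ?N \<Longrightarrow> \<rho> i < ?N" and r2: "\<And>i. i < ?N \<Longrightarrow> \<rho>' i < ?N"
    and i1: "\<And>i. i < ?N \<Longrightarrow> \<rho> (\<rho>' i) = i" and i2: "\<And>i. i < ?N \<Longrightarrow> \<rho>' (\<rho> i) = i"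
    unfolding \<rho>_def \<rho>'_def by auto
  have p1: "\<rho> permutes {0..<?N}" by (rule perm_of_inv[OF r1 r2 i1 i2]) (auto simp: \<rho>_def)
  have p2: "\<rho>' permutes {0..<?N}" by (rule perm_of_inv[OF r2 r1 i2 i1]) (auto simp: \<rho>'_def)
  show ?thesis
  proof (rule relabel_card[OF r1 r2 i1 i2])
    show "{M \<in> GG p q k (Suc n) b. rowv 0 M ?N \<in> PiE {..<?N} (\<lambda>_. Pq p q)} \<subseteq> carrier_mat ?N ?N"
      unfolding GG_def by auto
    show "GG p q (Suc k) n b \<subseteq> carrier_mat ?N ?N" unfolding GG_def by auto
  next
    fix M assume M: "M \<in> {M \<in> GG p q k (Suc n) b. rowv 0 M ?N \<in> PiE {..<?N} (\<lambda>_. Pq p q)}"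
    hence MG: "M \<in> GG p q k (Suc n) b" and row: "\<And>j. j < ?N \<Longrightarrow> M $$ (0,j) \<in> Pq p q"
      unfolding rowv_def by (auto simp: PiE_def Pi_def)
    note F = GG_facts[OF MG]
    have "rel \<rho> ?N M \<in> carrier_mat ?N ?N" unfolding rel_def by simp
    moreover have "\<forall>i<?N. \<forall>j<?N. rel \<rho> ?N M $$ (i,j) = rel \<rho> ?N M $$ (j,i) \<and> rel \<rho> ?N M $$ (i,j) \<in> dm p q n i j"
    proof (intro allI impI conjI)
      fix i j assume ij: "i < ?N" "j < ?N"
      have e: "rel \<rho> ?N M $$ (i,j) = M $$ (\<rho> i, \<rho> j)" "rel \<rho> ?N M $$ (j,i) = M $$ (\<rho> j, \<rho> i)"
        unfolding rel_def using ij by auto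
      show "rel \<rho> ?N M $$ (i,j) = rel \<rho> ?N M $$ (j,i)" unfolding e using F(2) r1 ij by auto
      have d: "M $$ (\<rho> i, \<rho> j) \<in> dm p q (Suc n) (\<rho> i) (\<rho> j)" using F(3) r1 ij by auto
      have a: "M $$ (0, \<rho> j) \<in> Pq p q" "M $$ (0, \<rho> i) \<in> Pq p q" using row r1 ij by auto
      have b: "M $$ (\<rho> i, 0) = M $$ (0, \<rho> i)" using F(2) r1 ij by auto
      show "rel \<rho> ?N M $$ (i,j) \<in> dm p q n i j" unfolding e
        using d a b ij unfolding dm_def Pq_def \<rho>_def by (auto split: if_splits)
    qed
    moreover have "b \<longrightarrow> \<not> int q dvd det (rel \<rho> ?N M)" using F(4) rel_det[OF p1 F(1)] by simp
    ultimately show "rel \<rho> ?N M \<in> GG p q (Suc k) n b" unfolding GG_def by simp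
  next
    fix M assume MG: "M \<in> GG p q (Suc k) n b"
    note F = GG_facts[OF MG]
    have c: "M \<in> carrier_mat ?N ?N" using F(1) by simp
    have "rel \<rho>' ?N M \<in> carrier_mat ?N ?N" unfolding rel_def by simp
    moreover have "\<forall>i<?N. \<forall>j<?N. rel \<rho>' ?N M $$ (i,j) = rel \<rho>' ?N M $$ (j,i) \<and> rel \<rho>' ?N M $$ (i,j) \<in> dm p q (Suc n) i j"
    proof (intro allI impI conjI)
      fix i j assume ij: "i < ?N" "j < ?N"
      have e: "rel \<rho>' ?N M $$ (i,j) = M $$ (\<rho>' i, \<rho>' j)" "rel \<rho>' ?N M $$ (j,i) = M $$ (\<rho>' j, \<rho>' i)"
        unfolding rel_def using ij by auto
      show "rel \<rho>' ?N M $$ (i,j) = rel \<rho>' ?N M $$ (j,i)" unfolding e using F(2) r2 ij by auto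
      have d: "M $$ (\<rho>' i, \<rho>' j) \<in> dm p q n (\<rho>' i) (\<rho>' j)" using F(3) r2 ij by auto
      show "rel \<rho>' ?N M $$ (i,j) \<in> dm p q (Suc n) i j" unfolding e
        using d ij unfolding dm_def \<rho>'_def by (auto split: if_splits)
    qed
    moreover have "b \<longrightarrow> \<not> int q dvd det (rel \<rho>' ?N M)" using F(4) rel_det[OF p2 c] by simp
    moreover have "rowv 0 (rel \<rho>' ?N M) ?N \<in> PiE {..<?N} (\<lambda>_. Pq p q)"
    proof -
      have "M $$ (n, \<rho>' j) \<in> Pq p q" if "j < ?N" for j
        using F(3)[of n "\<rho>' j"] r2[OF that] unfolding dm_def Pq_def \<rho>'_def by auto
      thus ?thesis unfolding rowv_def rel_def by (auto simp: \<rho>'_def)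
    qed
    ultimately show "rel \<rho>' ?N M \<in> {M \<in> GG p q k (Suc n) b. rowv 0 M ?N \<in> PiE {..<?N} (\<lambda>_. Pq p q)}"
      unfolding GG_def by simp
  qed
qed

lemma finite_dm: "finite (dm p q n i j)"
  by (rule finite_subset[of _ "{0..<int q}"]) (auto simp: dm_def)

lemma fiberB:
  assumes pr: "prime p" and q: "q = p^\<mu>" "\<mu> \<ge> 1" and r: "r \<in> Rows p q (Suc n) k"
    and r0: "int p dvd r 0" and j0: "1 \<le> j0" "j0 < Suc (Suc n)" "\<not> int p dvd r j0"
  shows "card {M \<in> GG p q k (Suc (Suc n)) b. rowv 0 M (Suc (Suc n) + k) = r}
     = card {s \<in> PiE {..<Suc (Suc n) + k} (\<lambda>j. dm p q (Suc (Suc n)) 1 j). s 0 = r j0} * card (GG p q k n b)"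
proof -
  let ?N = "Suc (Suc n) + k"
  let ?S = "{s \<in> PiE {..<?N} (\<lambda>j. dm p q (Suc (Suc n)) 1 j). s 0 = r j0}"
  have qpos: "q > 0" using q pr prime_gt_0_nat by simp
  define \<sigma> where "\<sigma> i = (if i = 1 then j0 else if i = j0 then 1 else i)" for i
  have s1: "\<And>i. i < ?N \<Longrightarrow> \<sigma> i < ?N" and s2: "\<And>i. i < ?N \<Longrightarrow> \<sigma> (\<sigma> i) = i"
    and s0: "\<sigma> 0 = 0" and sf: "\<And>i. \<sigma> i < Suc (Suc n) \<longleftrightarrow> i < Suc (Suc n)"
    using j0 unfolding \<sigma>_def by auto
  have sp: "\<sigma> permutes {0..<?N}" by (rule perm_of_inv[OF s1 s1 s2 s2]) (use j0 in \<open>auto simp: \<sigma>_def\<close>)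
  define r' where "r' = restrict (\<lambda>j. r (\<sigma> j)) {..<?N}"
  have rR: "\<And>j. j < ?N \<Longrightarrow> r j \<in> dm p q (Suc (Suc n)) 0 j" using r unfolding Rows_def by auto
  have rs: "r (\<sigma> j) \<in> dm p q (Suc (Suc n)) 0 j" if "j < ?N" for j
    using rR[OF s1[OF that]] sf[of j] unfolding dm_def by auto
  have r'R: "r' \<in> Rows p q (Suc n) k"
    unfolding Rows_def r'_def using rs by auto
  have r'0: "r' 0 = r 0" and r'1: "r' 1 = r j0" unfolding r'_def using s0 j0 by (auto simp: \<sigma>_def)
  have step1: "card {M \<in> GG p q k (Suc (Suc n)) b. rowv 0 M ?N = r} = card {M \<in> GG p q k (Suc (Suc n)) b. rowv 0 M ?N = r'}"
  proof (rule relabel_card[OF s1 s1 s2 s2])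
    show "{M \<in> GG p q k (Suc (Suc n)) b. rowv 0 M ?N = r} \<subseteq> carrier_mat ?N ?N" unfolding GG_def by auto
    show "{M \<in> GG p q k (Suc (Suc n)) b. rowv 0 M ?N = r'} \<subseteq> carrier_mat ?N ?N" unfolding GG_def by auto
  next
    have gen: "rel \<sigma> ?N M \<in> GG p q k (Suc (Suc n)) b" if MG: "M \<in> GG p q k (Suc (Suc n)) b" for M
    proof -
      note F = GG_facts[OF MG]
      have "\<forall>i<?N. \<forall>j<?N. rel \<sigma> ?N M $$ (i,j) = rel \<sigma> ?N M $$ (j,i) \<and> rel \<sigma> ?N M $$ (i,j) \<in> dm p q (Suc (Suc n)) i j"
      proof (intro allI impI conjI)
        fix i j assume ij: "i < ?N" "j < ?N"
        have e: "rel \<sigma> ?N M $$ (i,j) = M $$ (\<sigma> i, \<sigma> j)" "rel \<sigma> ?N M $$ (j,i) = M $$ (\<sigma> j, \<sigma> i)"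
          unfolding rel_def using ij by auto
        show "rel \<sigma> ?N M $$ (i,j) = rel \<sigma> ?N M $$ (j,i)" unfolding e using F(2) s1 ij by auto
        have "M $$ (\<sigma> i, \<sigma> j) \<in> dm p q (Suc (Suc n)) (\<sigma> i) (\<sigma> j)" using F(3) s1 ij by auto
        thus "rel \<sigma> ?N M $$ (i,j) \<in> dm p q (Suc (Suc n)) i j" unfolding e dm_def using sf[of i] sf[of j] by auto
      qed
      moreover have "b \<longrightarrow> \<not> int q dvd det (rel \<sigma> ?N M)" using F(4) rel_det[OF sp F(1)] by simp
      ultimately show ?thesis unfolding GG_def rel_def by simp
    qed
    fix M
    assume M: "M \<in> {M \<in> GG p q k (Suc (Suc n)) b. rowv 0 M ?N = r}"
    have rowM: "\<forall>j<?N. M $$ (0,j) = r j" using M rowv_eq[OF r[unfolded Rows_def], of 0 M] by simp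
    have "rowv 0 (rel \<sigma> ?N M) ?N = r'" unfolding rowv_def rel_def r'_def using rowM s0 s1
      by (auto simp: restrict_def fun_eq_iff)
    thus "rel \<sigma> ?N M \<in> {M \<in> GG p q k (Suc (Suc n)) b. rowv 0 M ?N = r'}" using gen M by simp
  next
    have gen: "rel \<sigma> ?N M \<in> GG p q k (Suc (Suc n)) b" if MG: "M \<in> GG p q k (Suc (Suc n)) b" for M
    proof -
      note F = GG_facts[OF MG]
      have "\<forall>i<?N. \<forall>j<?N. rel \<sigma> ?N M $$ (i,j) = rel \<sigma> ?N M $$ (j,i) \<and> rel \<sigma> ?N M $$ (i,j) \<in> dm p q (Suc (Suc n)) i j"
      proof (intro allI impI conjI)
        fix i j assume ij: "i < ?N" "j < ?N"
        have e: "rel \<sigma> ?N M $$ (i,j) = M $$ (\<sigma> i, \<sigma> j)" "rel \<sigma> ?N M $$ (j,i) = M $$ (\<sigma> j, \<sigma> i)"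
          unfolding rel_def using ij by auto
        show "rel \<sigma> ?N M $$ (i,j) = rel \<sigma> ?N M $$ (j,i)" unfolding e using F(2) s1 ij by auto
        have "M $$ (\<sigma> i, \<sigma> j) \<in> dm p q (Suc (Suc n)) (\<sigma> i) (\<sigma> j)" using F(3) s1 ij by auto
        thus "rel \<sigma> ?N M $$ (i,j) \<in> dm p q (Suc (Suc n)) i j" unfolding e dm_def using sf[of i] sf[of j] by auto
      qed
      moreover have "b \<longrightarrow> \<not> int q dvd det (rel \<sigma> ?N M)" using F(4) rel_det[OF sp F(1)] by simp
      ultimately show ?thesis unfolding GG_def rel_def by simp
    qed
    fix M
    assume M: "M \<in> {M \<in> GG p q k (Suc (Suc n)) b. rowv 0 M ?N = r'}"
    have rowM: "\<forall>j<?N. M $$ (0,j) = r' j" using M rowv_eq[OF r'R[unfolded Rows_def], of 0 M] by simp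
    have "rowv 0 (rel \<sigma> ?N M) ?N = r" 
    proof (rule rowv_eq[OF r[unfolded Rows_def], THEN iffD2], intro allI impI)
      fix j assume j: "j < ?N"
      have "rel \<sigma> ?N M $$ (0,j) = M $$ (0, \<sigma> j)" unfolding rel_def using j s0 by simp
      also have "\<dots> = r' (\<sigma> j)" using rowM s1[OF j] by simp
      also have "\<dots> = r j" unfolding r'_def using s1[OF j] s2[OF j] by simp
      finally show "rel \<sigma> ?N M $$ (0,j) = r j" .
    qed
    thus "rel \<sigma> ?N M \<in> {M \<in> GG p q k (Suc (Suc n)) b. rowv 0 M ?N = r}" using gen M by simp
  qed
  let ?A = "{M \<in> GG p q k (Suc (Suc n)) b. rowv 0 M ?N = r'}"
  have finS: "finite ?S"
  proof -
    have "finite (dm p q (Suc (Suc n)) 1 j)" for j by (rule finite_dm)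
    hence "finite (PiE {..<?N} (\<lambda>j. dm p q (Suc (Suc n)) 1 j))" by (intro finite_PiE) auto
    thus ?thesis by (rule finite_subset[rotated]) auto
  qed
  have rowM: "\<And>M. M \<in> ?A \<Longrightarrow> \<forall>j<?N. M $$ (0,j) = r' j" using rowv_eq[OF r'R[unfolded Rows_def], of 0] by auto
  have step2: "card ?A = (\<Sum>s\<in>?S. card {M \<in> ?A. rowv 1 M ?N = s})"
  proof (rule card_fibers)
    show "finite ?A" using finite_GG by (rule finite_subset[rotated]) auto
    show "(\<lambda>M. rowv 1 M ?N) ` ?A \<subseteq> ?S"
    proof
      fix s assume "s \<in> (\<lambda>M. rowv 1 M ?N) ` ?A"
      then obtain M where M: "M \<in> ?A" and s: "s = rowv 1 M ?N" by blast
      note F = GG_facts[of M p q k "Suc (Suc n)" b]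
      have "M $$ (1,0) = r' 1" using F(2)[of 1 0] M rowM[OF M] by auto
      thus "s \<in> ?S" unfolding s rowv_def using F(3) M r'1 by auto
    qed
  qed (rule finS)
  have step3: "card {M \<in> ?A. rowv 1 M ?N = s} = card (GG p q k n b)" if sS: "s \<in> ?S" for s
  proof -
    have two: "(2::nat) + n = Suc (Suc n)" by simp
    define t :: "nat \<Rightarrow> nat \<Rightarrow> int" where "t i j = (if i = 0 then r' j else s j)" for i j
    have sP: "s \<in> PiE {..<?N} (\<lambda>j. dm p q (Suc (Suc n)) 1 j)" using sS by simp
    have sR: "\<And>j. j < ?N \<Longrightarrow> s j \<in> dm p q (Suc (Suc n)) 1 j" and s0': "s 0 = r j0" using sS by auto
    have r'R': "\<And>j. j < ?N \<Longrightarrow> r' j \<in> dm p q (Suc (Suc n)) 0 j" using r'R unfolding Rows_def by auto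
    let ?M0 = "bord 2 (2+n+k) t"
    have M0: "?M0 \<in> GG p q k (2+n) False"
    proof (rule bord_GG[OF qpos])
      fix i j assume "i < (2::nat)" "j < (2::nat)"
      thus "t i j = t j i" unfolding t_def using s0' r'1 by (auto simp: less_2_cases_iff)
    next
      fix i j assume ij: "i < (2::nat)" "j < 2+n+k"
      have e: "dm p q (2+n) i j = dm p q (Suc (Suc n)) 0 j" "dm p q (Suc (Suc n)) 1 j = dm p q (Suc (Suc n)) 0 j"
        using ij by (auto simp: dm_def)
      show "t i j \<in> dm p q (2+n) i j" unfolding t_def e(1) using sR[of j] r'R'[of j] e(2) ij by auto
    qed
    have "{M \<in> ?A. rowv 1 M ?N = s} = {M \<in> GG p q k (2+n) b. \<forall>i<2. \<forall>j<2+n+k. M $$ (i,j) = ?M0 $$ (i,j)}"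
    proof -
      have "(rowv 0 M ?N = r' \<and> rowv 1 M ?N = s) \<longleftrightarrow> (\<forall>i<2. \<forall>j<2+n+k. M $$ (i,j) = ?M0 $$ (i,j))" for M
      proof -
        have "(rowv 0 M ?N = r' \<and> rowv 1 M ?N = s) \<longleftrightarrow> (\<forall>j<?N. M $$ (0,j) = r' j) \<and> (\<forall>j<?N. M $$ (1,j) = s j)"
          using rowv_eq[OF r'R[unfolded Rows_def], of 0 M] rowv_eq[OF sP, of 1 M] by auto
        also have "\<dots> \<longleftrightarrow> (\<forall>i<2. \<forall>j<?N. M $$ (i,j) = t i j)" unfolding t_def by (auto simp: less_2_cases_iff)
        also have "\<dots> \<longleftrightarrow> (\<forall>i<2. \<forall>j<2+n+k. M $$ (i,j) = ?M0 $$ (i,j))"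
          using bord_agree[of 2 "2+n+k" M t] by simp
        finally show ?thesis .
      qed
      moreover have "GG p q k (2+n) b = GG p q k (Suc (Suc n)) b" by (simp add: two)
      ultimately show ?thesis by auto
    qed
    also have "card \<dots> = card (GG p q k n b)"
    proof (rule fib_card[OF pr q M0])
      assume b
      have "det (Bm ?M0 2) = t 0 0 * t 1 1 - t 0 1 * t 1 0" by (simp add: Bm_bord det_2)
      also have "\<dots> = r 0 * s 1 - r j0 * r j0" unfolding t_def using r'0 r'1 s0' by simp
      finally have d: "det (Bm ?M0 2) = r 0 * s 1 - r j0 * r j0" .
      show "\<not> int p dvd det (Bm ?M0 2)"
      proof
        assume "int p dvd det (Bm ?M0 2)"
        hence "int p dvd r 0 * s 1 - r j0 * r j0" using d by simp
        moreover have "int p dvd r 0 * s 1" using r0 by simp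
        ultimately have "int p dvd r 0 * s 1 - (r 0 * s 1 - r j0 * r j0)" using dvd_diff[of "int p" "r 0 * s 1"] by blast
        hence "int p dvd r j0 * r j0" by simp
        hence "int p dvd r j0" using pr prime_dvd_mult_iff[of "int p"] by auto
        thus False using j0 by simp
      qed
    qed
    finally show ?thesis .
  qed
  show ?thesis using step1 step2 step3 by simp
qed


lemma prod_if_split: "(\<Prod>j<a+b. (if j < a then x else y)) = (x::nat)^a * y^b"
proof (induction b)
  case 0 then show ?case by simp
next
  case (Suc b) then show ?case by (simp add: lessThan_Suc)
qed

lemma card_Pq: assumes "p > 0" "q = p * Q" shows "card (Pq p q) = Q"
proof -
  have "Pq p q = (\<lambda>y. int p * y) ` {0..<int Q}"
  proof
    show "Pq p q \<subseteq> (\<lambda>y. int p * y) ` {0..<int Q}"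
    proof
      fix x assume "x \<in> Pq p q"
      then obtain y where x: "x = int p * y" "0 \<le> x" "x < int q" unfolding Pq_def by (auto elim: dvdE)
      have "0 \<le> y" using x assms by (simp add: zero_le_mult_iff)
      moreover have "y < int Q" using x assms by simp
      ultimately show "x \<in> (\<lambda>y. int p * y) ` {0..<int Q}" using x by auto
    qed
    show "(\<lambda>y. int p * y) ` {0..<int Q} \<subseteq> Pq p q" unfolding Pq_def using assms by auto
  qed
  moreover have "inj_on (\<lambda>y. int p * y) {0..<int Q}" using assms by (auto intro: inj_onI)
  ultimately show ?thesis by (simp add: card_image)
qed

lemma card_dm0: assumes "p > 0" "q = p * Q"
  shows "card (dm p q n 0 j) = (if j < n then q else Q)"
proof -
  have "{x \<in> {0..<int q}. int p dvd x} = Pq p q" unfolding Pq_def ..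
  thus ?thesis unfolding dm_def using card_Pq[OF assms] by (cases "j < n") auto
qed

lemma card_Rows: assumes "p > 0" "q = p * Q"
  shows "card (Rows p q n k) = q^Suc n * Q^k"
proof -
  have "card (Rows p q n k) = (\<Prod>j<Suc n + k. card (dm p q (Suc n) 0 j))"
    unfolding Rows_def by (simp add: card_PiE)
  also have "\<dots> = (\<Prod>j<Suc n + k. (if j < Suc n then q else Q))" using card_dm0[OF assms] by simp
  finally show ?thesis by (simp only: prod_if_split)
qed

lemma card_TA: assumes "p > 0" "q = p * Q"
  shows "card {r \<in> Rows p q n k. \<not> int p dvd r 0} = (q - Q) * q^n * Q^k"
proof -
  let ?D = "\<lambda>j. if j = 0 then {0..<int q} - Pq p q else dm p q (Suc n) 0 j"
  have "{r \<in> Rows p q n k. \<not> int p dvd r 0} = PiE {..<Suc n + k} ?D"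
    unfolding Rows_def by (auto simp: PiE_def Pi_def dm_def Pq_def split: if_splits)
  hence "card {r \<in> Rows p q n k. \<not> int p dvd r 0} = (\<Prod>j<Suc (n + k). card (?D j))"
    by (simp add: card_PiE)
  also have "\<dots> = card (?D 0) * (\<Prod>j<n + k. card (?D (Suc j)))"
    by (rule prod.lessThan_Suc_shift)
  also have "card (?D 0) = q - Q"
  proof -
    have "Pq p q \<subseteq> {0..<int q}" unfolding Pq_def by auto
    hence "card ({0..<int q} - Pq p q) = card {0..<int q} - card (Pq p q)"
      by (intro card_Diff_subset) (auto intro: finite_subset)
    hence "card ({0..<int q} - Pq p q) = q - Q" using card_Pq[OF assms] by simp
    thus ?thesis by simp
  qed
  also have "(\<Prod>j<n + k. card (?D (Suc j))) = (\<Prod>j<n + k. (if j < n then q else Q))"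
    using card_dm0[OF assms] by simp
  finally show ?thesis by (simp only: prod_if_split mult.assoc)
qed

lemma card_TC: assumes "p > 0" "q = p * Q"
  shows "card (PiE {..<N} (\<lambda>_. Pq p q)) = Q^N"
  using card_Pq[OF assms] by (simp add: card_PiE)

definition hh :: "nat \<Rightarrow> nat \<Rightarrow> nat \<Rightarrow> nat \<Rightarrow> real" where
  "hh p q k n = real (card (GG p q k n True)) / real (card (GG p q k n False))"

lemma GG_pos: assumes "q > 0" shows "card (GG p q k n False) > 0"
proof -
  have "0\<^sub>m (n+k) (n+k) \<in> GG p q k n False" unfolding GG_def dm_def using assms by auto
  thus ?thesis using finite_GG card_gt_0_iff by blast
qed

lemma finite_Rows: "finite (Rows p q n k)"
  unfolding Rows_def by (intro finite_PiE finite_dm) auto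

lemma hh_rec:
  assumes pr: "prime p" and q: "q = p^\<mu>" and mu: "\<mu> \<ge> 1"
  shows "hh p q k (Suc n) = (1 - 1/p) * hh p q k n + (1/p - 1/p^(Suc n)) * hh p q k (n - 1)
      + 1/p^(Suc n) * hh p q (Suc k) n"
proof -
  define Q where "Q = p^(\<mu>-1)"
  have p0: "p > 0" using pr prime_gt_0_nat by simp
  have qQ: "q = p * Q" unfolding Q_def q using mu by (cases \<mu>) auto
  have qpos: "q > 0" using q p0 by simp
  have Qpos: "Q > 0" unfolding Q_def using p0 by simp
  let ?N = "Suc n + k"
  let ?R = "Rows p q n k"
  define f where "f b r = card {M \<in> GG p q k (Suc n) b. rowv 0 M ?N = r}" for b r
  define TA where "TA = {r \<in> ?R. \<not> int p dvd r 0}"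
  define TC where "TC = PiE {..<?N} (\<lambda>_. Pq p q)"
  define TB where "TB = ?R - TA - TC"
  have TCR: "TC \<subseteq> ?R" unfolding TC_def Rows_def Pq_def dm_def by (auto simp: PiE_def Pi_def)
  have TAR: "TA \<subseteq> ?R" unfolding TA_def by auto
  have TAC: "TA \<inter> TC = {}" unfolding TA_def TC_def Pq_def by (auto simp: PiE_def Pi_def)
  have finR: "finite ?R" by (rule finite_Rows)
  have Rsplit: "?R = TA \<union> TB \<union> TC" unfolding TB_def using TCR TAR by auto
  have fin: "finite TA" "finite TB" "finite TC" using finR TCR TAR unfolding TB_def by (auto intro: finite_subset)
  have total: "card (GG p q k (Suc n) b) = (\<Sum>r\<in>?R. f b r)" for b
    unfolding f_def by (rule card_fibers[OF finite_GG]) (use rowv_Rows[of _ p q k n b] finR in auto)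
  have split: "(\<Sum>r\<in>?R. f b r) = (\<Sum>r\<in>TA. f b r) + (\<Sum>r\<in>TB. f b r) + (\<Sum>r\<in>TC. f b r)" for b
  proof -
    have "(\<Sum>r\<in>?R. f b r) = (\<Sum>r\<in>TA \<union> TB \<union> TC. f b r)" using Rsplit by simp
    also have "\<dots> = (\<Sum>r\<in>TA \<union> TB. f b r) + (\<Sum>r\<in>TC. f b r)"
      by (rule sum.union_disjoint) (use fin TAC in \<open>auto simp: TB_def\<close>)
    also have "(\<Sum>r\<in>TA \<union> TB. f b r) = (\<Sum>r\<in>TA. f b r) + (\<Sum>r\<in>TB. f b r)"
      by (rule sum.union_disjoint) (use fin in \<open>auto simp: TB_def\<close>)
    finally show ?thesis .
  qed
  have fA: "f b r = card (GG p q k n b)" if "r \<in> TA" for b r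
    unfolding f_def by (rule fiberA[OF pr q mu]) (use that in \<open>auto simp: TA_def\<close>)
  have fF: "f False r = card (GG p q k n False)" if "r \<in> ?R" for r
    unfolding f_def by (rule fiberA[OF pr q mu that]) simp
  have sC: "(\<Sum>r\<in>TC. f b r) = card (GG p q (Suc k) n b)" for b
  proof -
    let ?A = "{M \<in> GG p q k (Suc n) b. rowv 0 M ?N \<in> TC}"
    have "card ?A = (\<Sum>s\<in>TC. card {M \<in> ?A. rowv 0 M ?N = s})"
      by (rule card_fibers) (use finite_GG fin in \<open>auto intro: finite_subset\<close>)
    also have "\<dots> = (\<Sum>r\<in>TC. f b r)" unfolding f_def
    proof (rule sum.cong[OF refl])
      fix x assume "x \<in> TC"
      hence "{M \<in> ?A. rowv 0 M ?N = x} = {M \<in> GG p q k (Suc n) b. rowv 0 M ?N = x}" by auto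
      thus "card {M \<in> ?A. rowv 0 M ?N = x} = card {M \<in> GG p q k (Suc n) b. rowv 0 M ?N = x}" by simp
    qed
    finally show ?thesis using fiberC[OF qpos, of p k n b] unfolding TC_def by simp
  qed
  have cF: "real (card (GG p q k n False)) > 0" using GG_pos[OF qpos] by simp
  have sB: "real (\<Sum>r\<in>TB. f True r) = real (card TB) * real (card (GG p q k n False)) * hh p q k (n-1)"
  proof -
    have "real (f True r) = real (card (GG p q k n False)) * hh p q k (n-1)" if r: "r \<in> TB" for r
    proof -
      have rR: "r \<in> ?R" and r0: "int p dvd r 0" and nC: "r \<notin> TC" using r unfolding TB_def TA_def by auto
      obtain j where j: "j < ?N" "r j \<notin> Pq p q" using nC rR unfolding TC_def Rows_def by (auto simp: PiE_def Pi_def)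
      have rj: "r j \<in> dm p q (Suc n) 0 j" using rR j unfolding Rows_def by auto
      have j1: "j < Suc n" "\<not> int p dvd r j" using rj j unfolding dm_def Pq_def by (auto split: if_splits)
      have j2: "j \<noteq> 0" using j1 r0 by (cases j) auto
      then obtain n' where n': "n = Suc n'" using j1 by (cases n) auto
      have j3: "1 \<le> j" using j2 by simp
      define X where "X = card {s \<in> PiE {..<Suc (Suc n') + k} (\<lambda>j. dm p q (Suc (Suc n')) 1 j). s 0 = r j}"
      have B: "f b r = X * card (GG p q k n' b)" for b
        unfolding f_def X_def n' by (rule fiberB[OF pr q mu rR[unfolded n'] r0 j3 j1(1)[unfolded n'] j1(2)])
      have "real (card (GG p q k n False)) = real X * real (card (GG p q k n' False))"
        using B[of False] fF[OF rR] by simp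
      moreover have "real (f True r) = real X * real (card (GG p q k n' True))" using B[of True] by simp
      moreover have "real (card (GG p q k n' False)) > 0" using GG_pos[OF qpos] by simp
      ultimately show ?thesis unfolding hh_def n' by simp
    qed
    hence "real (\<Sum>r\<in>TB. f True r) = (\<Sum>r\<in>TB. real (card (GG p q k n False)) * hh p q k (n-1))"
      by (simp add: of_nat_sum)
    thus ?thesis by simp
  qed
  have sAT: "(\<Sum>r\<in>TA. f b r) = card TA * card (GG p q k n b)" for b using fA by simp
  have sBF: "(\<Sum>r\<in>TB. f False r) = card TB * card (GG p q k n False)" using fF by (simp add: TB_def)
  have sCF: "(\<Sum>r\<in>TC. f False r) = card TC * card (GG p q k n False)" using fF TCR by (simp add: subset_iff)
  have cardR: "card ?R = card TA + card TB + card TC"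
  proof -
    have "card ?R = card (TA \<union> TB \<union> TC)" using Rsplit by simp
    also have "\<dots> = card (TA \<union> TB) + card TC"
      by (rule card_Un_disjoint) (use fin TAC in \<open>auto simp: TB_def\<close>)
    also have "card (TA \<union> TB) = card TA + card TB"
      by (rule card_Un_disjoint) (use fin in \<open>auto simp: TB_def\<close>)
    finally show ?thesis .
  qed
  define cn where "cn = real (card (GG p q k n False))"
  have F1: "real (card (GG p q k (Suc n) False)) = real (card ?R) * cn"
    unfolding total split sAT sBF sCF cn_def cardR by (simp add: algebra_simps)
  have F2: "real (card (GG p q (Suc k) n False)) = real (card TC) * cn"
    using sC[of False] sCF unfolding cn_def by (metis of_nat_mult)
  have T1: "real (card (GG p q k (Suc n) True)) = real (card TA) * (cn * hh p q k n)
      + real (card TB) * cn * hh p q k (n-1) + real (card TC) * cn * hh p q (Suc k) n"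
  proof -
    have a: "real (card (GG p q k n True)) = cn * hh p q k n" unfolding hh_def cn_def using cF by simp
    have c: "real (card (GG p q (Suc k) n True)) = real (card TC) * cn * hh p q (Suc k) n"
      unfolding hh_def F2[symmetric] using GG_pos[OF qpos, of p "Suc k" n] by simp
    have "real (card (GG p q k (Suc n) True)) = real (\<Sum>r\<in>TA. f True r) + real (\<Sum>r\<in>TB. f True r) + real (\<Sum>r\<in>TC. f True r)"
      by (simp only: total split of_nat_add)
    also have "real (\<Sum>r\<in>TA. f True r) = real (card TA) * (cn * hh p q k n)" unfolding sAT using a by simp
    also have "real (\<Sum>r\<in>TB. f True r) = real (card TB) * cn * hh p q k (n-1)" unfolding sB cn_def ..
    also have "real (\<Sum>r\<in>TC. f True r) = real (card TC) * cn * hh p q (Suc k) n" unfolding sC using c .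
    finally show ?thesis .
  qed
  have hk: "hh p q k (Suc n) = (real (card TA) * hh p q k n + real (card TB) * hh p q k (n-1)
      + real (card TC) * hh p q (Suc k) n) / real (card ?R)"
  proof -
    have "cn > 0" unfolding cn_def using cF by simp
    moreover have "real (card ?R) > 0" using card_Rows[OF p0 qQ] qpos Qpos by simp
    ultimately show ?thesis unfolding hh_def[of p q k "Suc n"] T1 F1 by (simp add: field_simps)
  qed
  have Rpos: "real (card ?R) > 0" using card_Rows[OF p0 qQ] qpos Qpos by simp
  have Qq: "Q \<le> q" using qQ p0 by simp
  have rA: "real (card TA) / real (card ?R) = 1 - 1/p"
  proof -
    have "real (card TA) / real (card ?R) = (real q - real Q) * real q^n * real Q^k / (real q^Suc n * real Q^k)"
      unfolding TA_def card_TA[OF p0 qQ] card_Rows[OF p0 qQ] using Qq by (simp add: of_nat_diff)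
    also have "\<dots> = (real q - real Q) / real q" using qpos Qpos by (simp add: field_simps)
    also have "\<dots> = 1 - 1/p" unfolding qQ using Qpos p0 by (simp add: field_simps)
    finally show ?thesis .
  qed
  have rC: "real (card TC) / real (card ?R) = 1/p^Suc n"
  proof -
    have "real (card TC) / real (card ?R) = real Q^(Suc n + k) / (real q^Suc n * real Q^k)"
      unfolding TC_def card_TC[OF p0 qQ] card_Rows[OF p0 qQ] by simp
    also have "\<dots> = real Q^Suc n / real q^Suc n" using qpos Qpos by (simp add: field_simps power_add)
    also have "\<dots> = 1/p^Suc n" unfolding qQ using Qpos p0 by (simp add: field_simps power_mult_distrib)
    finally show ?thesis .
  qed
  have rB: "real (card TB) / real (card ?R) = 1/p - 1/p^Suc n"
  proof -
    have e: "real (card TB) = real (card ?R) - real (card TA) - real (card TC)" using cardR by simp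
    have "real (card TB) / real (card ?R) = 1 - real (card TA) / real (card ?R) - real (card TC) / real (card ?R)"
      unfolding e using Rpos by (simp add: diff_divide_distrib)
    thus ?thesis unfolding rA rC by simp
  qed
  have "hh p q k (Suc n) = real (card TA) / real (card ?R) * hh p q k n + real (card TB) / real (card ?R) * hh p q k (n-1)
      + real (card TC) / real (card ?R) * hh p q (Suc k) n"
    unfolding hk using Rpos by (simp add: field_simps)
  thus ?thesis unfolding rA rB rC by simp
qed


definition symU :: "nat \<Rightarrow> int set \<Rightarrow> int mat set" where
  "symU N D = {M \<in> carrier_mat N N. \<forall>i<N. \<forall>j<N. M $$ (i,j) = M $$ (j,i) \<and> M $$ (i,j) \<in> D}"

definition UU :: "nat \<Rightarrow> (nat \<times> nat) set" where "UU N = {(i,j). i \<le> j \<and> j < N}"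

definition toF :: "nat \<Rightarrow> int mat \<Rightarrow> nat \<times> nat \<Rightarrow> int" where
  "toF N M = restrict (\<lambda>(i,j). M $$ (i,j)) (UU N)"
definition ofF :: "nat \<Rightarrow> (nat \<times> nat \<Rightarrow> int) \<Rightarrow> int mat" where
  "ofF N f = mat N N (\<lambda>(i,j). if i \<le> j then f (i,j) else f (j,i))"

lemma finite_UU: "finite (UU N)"
  by (rule finite_subset[of _ "{..<N} \<times> {..<N}"]) (auto simp: UU_def)

lemma fiber_card_symU:
  assumes M': "M' \<in> symU N E"
    and c: "\<And>e. e \<in> E \<Longrightarrow> card {d \<in> D. g d = e} = c"
  shows "card {M \<in> symU N D. map_mat g M = M'} = c ^ card (UU N)"
proof -
  let ?A = "{M \<in> symU N D. map_mat g M = M'}"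
  let ?P = "PiE (UU N) (\<lambda>u. {d \<in> D. g d = toF N M' u})"
  have M'f: "M' \<in> carrier_mat N N" "\<And>i j. i<N \<Longrightarrow> j<N \<Longrightarrow> M' $$ (i,j) = M' $$ (j,i)"
     "\<And>i j. i<N \<Longrightarrow> j<N \<Longrightarrow> M' $$ (i,j) \<in> E" using M' unfolding symU_def by auto
  have "bij_betw (toF N) ?A ?P"
  proof (rule bij_betw_byWitness[where f' = "ofF N"])
    show "\<forall>a\<in>?A. ofF N (toF N a) = a"
    proof
      fix M assume "M \<in> ?A"
      hence M: "M \<in> carrier_mat N N" "\<And>i j. i<N \<Longrightarrow> j<N \<Longrightarrow> M $$ (i,j) = M $$ (j,i)" unfolding symU_def by auto
      show "ofF N (toF N M) = M" unfolding ofF_def toF_def UU_def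
        by (rule eq_matI) (use M in auto)
    qed
    show "\<forall>f\<in>?P. toF N (ofF N f) = f"
    proof
      fix f assume f: "f \<in> ?P"
      show "toF N (ofF N f) = f"
      proof
        fix u show "toF N (ofF N f) u = f u"
          using f unfolding toF_def ofF_def UU_def by (cases u) (auto simp: PiE_def extensional_def)
      qed
    qed
    show "toF N ` ?A \<subseteq> ?P"
    proof
      fix f assume "f \<in> toF N ` ?A"
      then obtain M where MA: "M \<in> ?A" and f: "f = toF N M" by blast
      hence M: "M \<in> carrier_mat N N" "\<And>i j. i<N \<Longrightarrow> j<N \<Longrightarrow> M $$ (i,j) \<in> D" "map_mat g M = M'"
        unfolding symU_def by auto
      have "g (M $$ (i,j)) = M' $$ (i,j)" if "i<N" "j<N" for i j using M that by auto
      thus "f \<in> ?P" unfolding f toF_def UU_def using M by auto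
    qed
    show "ofF N ` ?P \<subseteq> ?A"
    proof
      fix M assume "M \<in> ofF N ` ?P"
      then obtain f where f: "f \<in> ?P" and M: "M = ofF N f" by blast
      have fu: "\<And>i j. i \<le> j \<Longrightarrow> j < N \<Longrightarrow> f (i,j) \<in> D \<and> g (f (i,j)) = M' $$ (i,j)"
        using f unfolding toF_def UU_def by (auto simp: PiE_def Pi_def)
      have "M \<in> symU N D" unfolding M symU_def ofF_def using fu by auto
      moreover have "map_mat g M = M'"
      proof (rule eq_matI)
        fix i j assume "i < dim_row M'" "j < dim_col M'"
        hence ij: "i < N" "j < N" using M'f by auto
        show "map_mat g M $$ (i,j) = M' $$ (i,j)" unfolding M ofF_def
          using ij fu[of i j] fu[of j i] M'f(2)[OF ij] by auto
      qed (use M'f in \<open>auto simp: M ofF_def\<close>)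
      ultimately show "M \<in> ?A" by simp
    qed
  qed
  hence "card ?A = card ?P" by (rule bij_betw_same_card)
  also have "\<dots> = (\<Prod>u\<in>UU N. card {d \<in> D. g d = toF N M' u})" by (simp add: card_PiE finite_UU)
  also have "\<dots> = (\<Prod>u\<in>UU N. c)"
  proof (rule prod.cong[OF refl])
    fix u assume u: "u \<in> UU N"
    then obtain i j where "u = (i,j)" "i \<le> j" "j < N" unfolding UU_def by auto
    hence "toF N M' u \<in> E" using M'f(3)[of i j] unfolding toF_def UU_def by auto
    thus "card {d \<in> D. g d = toF N M' u} = c" by (rule c)
  qed
  finally show ?thesis by simp
qed

lemma symU_map: "M \<in> symU N D \<Longrightarrow> g ` D \<subseteq> E \<Longrightarrow> map_mat g M \<in> symU N E"
  unfolding symU_def by auto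

lemma finite_symU: assumes "finite D" shows "finite (symU N D)"
proof -
  have "toF N M \<in> PiE (UU N) (\<lambda>_. D)" if "M \<in> symU N D" for M
    unfolding toF_def PiE_def using that by (auto simp: symU_def UU_def)
  hence "toF N ` symU N D \<subseteq> PiE (UU N) (\<lambda>_. D)" by auto
  moreover have "inj_on (toF N) (symU N D)"
  proof (rule inj_onI)
    fix M M' assume M: "M \<in> symU N D" "M' \<in> symU N D" "toF N M = toF N M'"
    show "M = M'"
    proof (rule eq_matI)
      fix i j assume ij: "i < dim_row M'" "j < dim_col M'"
      hence ij': "i < N" "j < N" using M unfolding symU_def by auto
      have a: "M $$ (a,b) = M' $$ (a,b)" if "a \<le> b" "b < N" for a b
        using fun_cong[OF M(3), of "(a,b)"] that unfolding toF_def UU_def by simp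
      show "M $$ (i,j) = M' $$ (i,j)"
      proof (cases "i \<le> j")
        case True then show ?thesis using a ij' by simp
      next
        case False
        then have "M $$ (j,i) = M' $$ (j,i)" using a ij' by simp
        then show ?thesis using M ij' unfolding symU_def by auto
      qed
    qed (use M in \<open>auto simp: symU_def\<close>)
  qed
  moreover have "finite (PiE (UU N) (\<lambda>_. D))" using assms finite_UU by (intro finite_PiE) auto
  ultimately show ?thesis by (meson finite_imageD finite_subset)
qed

lemma card_pullback:
  assumes fD: "finite D" and fE: "finite E" and gDE: "g ` D \<subseteq> E"
    and c: "\<And>e. e \<in> E \<Longrightarrow> card {d \<in> D. g d = e} = c"
  shows "card {M \<in> symU N D. P (map_mat g M)} = c ^ card (UU N) * card {M' \<in> symU N E. P M'}"
proof -
  let ?A = "{M \<in> symU N D. P (map_mat g M)}"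
  let ?S = "{M' \<in> symU N E. P M'}"
  have "card ?A = (\<Sum>M'\<in>?S. card {M \<in> ?A. map_mat g M = M'})"
    by (rule card_fibers) (use finite_symU[OF fD] finite_symU[OF fE] symU_map[OF _ gDE] in auto)
  also have "\<dots> = (\<Sum>M'\<in>?S. c ^ card (UU N))"
  proof (rule sum.cong[OF refl])
    fix M' assume M': "M' \<in> ?S"
    have "{M \<in> ?A. map_mat g M = M'} = {M \<in> symU N D. map_mat g M = M'}" using M' by auto
    thus "card {M \<in> ?A. map_mat g M = M'} = c ^ card (UU N)" using fiber_card_symU[of M' N E D g c, OF _ c] M' by simp
  qed
  finally show ?thesis by simp
qed


fun Sf :: "real \<Rightarrow> nat \<Rightarrow> (nat \<Rightarrow> real) \<Rightarrow> real" where
  "Sf p 0 x = x 0"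
| "Sf p (Suc n) x = (1 - 1/p) * Sf p n x + (1/p - 1/p^(Suc n)) * Sf p (n - 1) x
      + (1/p^(Suc n)) * Sf p n (\<lambda>j. x (Suc j))"

declare Sf.simps(2)[simp del]

lemma Sf_lin: "Sf p n (\<lambda>j. \<alpha> * x j + \<beta> * y j) = \<alpha> * Sf p n x + \<beta> * Sf p n y"
proof (induction p n x arbitrary: y rule: Sf.induct)
  case (1 p x)
  then show ?case by simp
next
  case (2 p n x)
  show ?case
    apply (simp only: Sf.simps)
    apply (subst "2.IH"(1), subst "2.IH"(2), subst "2.IH"(3))
    by (simp add: algebra_simps)
qed

lemma Sf_mono: assumes p: "p \<ge> 1" shows "(\<And>j. x j \<le> y j) \<Longrightarrow> Sf p n x \<le> Sf p n y"
proof (induction n arbitrary: x y rule: less_induct)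
  case (less n)
  show ?case
  proof (cases n)
    case 0 then show ?thesis using less by simp
  next
    case (Suc m)
    have a: "0 \<le> 1 - 1/p" using p by simp
    have pp: "p \<le> p^Suc m" using p by (simp add: power_increasing[of 1 "Suc m" p, simplified])
    have b: "0 \<le> 1/p - 1/p^(Suc m)" using p pp by (simp add: frac_le)
    have c: "0 \<le> 1/p^(Suc m)" using p by simp
    have 1: "Sf p m x \<le> Sf p m y" by (rule less.IH) (use Suc less.prems in auto)
    have 2: "Sf p (m-1) x \<le> Sf p (m-1) y" by (rule less.IH) (use Suc less.prems in auto)
    have 3: "Sf p m (\<lambda>j. x (Suc j)) \<le> Sf p m (\<lambda>j. y (Suc j))" by (rule less.IH) (use Suc less.prems in auto)
    show ?thesis using mult_left_mono[OF 1 a] mult_left_mono[OF 2 b] mult_left_mono[OF 3 c] Suc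
      by (simp add: Sf.simps)
  qed
qed

definition Kx :: "real \<Rightarrow> (nat \<Rightarrow> real) \<Rightarrow> nat \<Rightarrow> real" where
  "Kx p x r = (1 - 1/p^r) * x (r - 1) + (1/p^r - 1/p^(Suc r)) * x r + 1/p^(Suc r) * x (Suc r)"

lemma Kx_id: assumes p: "p > 0"
  shows "(p - 1) * x r + Kx p (\<lambda>j. x (Suc j)) r = p * Kx p x (Suc r)"
  using p by (cases r) (auto simp: Kx_def field_simps)

lemma alg1: fixes p v :: real assumes "p > 0" "v > 0"
  shows "(1-1/p)*U + (1/p - 1/(p*v))*S + (1/(p*v))*(p*T + (-(p-1))*S) = (1-1/p)*U + (1/p - 1/v)*S + 1/v*T"
  using assms by (simp add: field_simps)

lemma Sf_K: assumes p: "p > 0" shows "Sf p (Suc n) x = Sf p n (Kx p x)"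
proof (induction n arbitrary: x rule: less_induct)
  case (less n)
  show ?case
  proof (cases n)
    case 0
    then show ?thesis using p by (simp add: Kx_def field_simps Sf.simps)
  next
    case (Suc m)
    have e: "\<And>j. (Kx p (\<lambda>j. x (Suc j))) j = p * Kx p x (Suc j) - (p - 1) * x j"
      using Kx_id[OF p] by (simp add: algebra_simps)
    have IH1: "Sf p (Suc m) x = Sf p m (Kx p x)" using Suc by (intro less.IH) simp
    have IH2: "Sf p (Suc m) (\<lambda>j. x (Suc j)) = Sf p m (Kx p (\<lambda>j. x (Suc j)))" using Suc by (intro less.IH) simp
    have e2: "Kx p (\<lambda>j. x (Suc j)) = (\<lambda>j. p * Kx p x (Suc j) + (-(p-1)) * x j)"
      using e by (intro ext) (simp add: algebra_simps)
    have L: "Sf p m (Kx p (\<lambda>j. x (Suc j))) = p * Sf p m (\<lambda>j. Kx p x (Suc j)) + (-(p - 1)) * Sf p m x"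
      unfolding e2 by (rule Sf_lin)
    show ?thesis
    proof (cases m)
      case 0
      have p0: "p \<noteq> 0" using p by simp
      have n1: "n = Suc 0" using \<open>n = Suc m\<close> 0 by simp
      have h1: "Sf p (Suc n) x = (1 - 1/p) * ((1 - 1/p) * x 0 + 1/p * x 1) + (1/p - 1/p^2) * x 0 
          + 1/p^2 * ((1 - 1/p) * x 1 + 1/p * x 2)"
        unfolding n1 by (simp add: numeral_2_eq_2 power2_eq_square Sf.simps)
      have h2: "Sf p n (Kx p x) = (1 - 1/p) * ((1 - 1/p) * x 0 + 1/p * x 1) + 
         1/p * ((1 - 1/p) * x 0 + (1/p - 1/p^2) * x 1 + 1/p^2 * x 2)"
        unfolding n1 by (simp add: Kx_def numeral_2_eq_2 power2_eq_square Sf.simps)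
      show ?thesis unfolding h1 h2 using p0 by (simp add: field_simps power2_eq_square)
    next
      case (Suc k)
      have IH3: "Sf p m x = Sf p k (Kx p x)" unfolding Suc by (rule less.IH) (simp add: \<open>n = Suc m\<close> Suc)
      define S where "S = Sf p m x"
      define T where "T = Sf p m (\<lambda>j. Kx p x (Suc j))"
      define U where "U = Sf p m (Kx p x)"
      have h1: "Sf p (Suc n) x = (1-1/p)*U + (1/p - 1/p^(Suc (Suc m)))*S + (1/p^Suc(Suc m))*(p*T + (-(p-1))*S)"
        unfolding \<open>n = Suc m\<close> Sf.simps(2)[of p "Suc m"] IH1 IH2 L S_def T_def U_def by simp
      have h2: "Sf p n (Kx p x) = (1-1/p)*U + (1/p - 1/p^(Suc m))*S + 1/p^(Suc m) * T"
        unfolding \<open>n = Suc m\<close> Sf.simps(2)[of p m] S_def T_def U_def IH3 using Suc by simp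
      have h3: "p^Suc(Suc m) = p * p^Suc m" by simp
      have v: "p^Suc m > 0" using p by simp
      show ?thesis unfolding h1 h2 h3 by (rule alg1[OF p v])
    qed
  qed
qed

lemma alg2: fixes u w a b c d :: real
  assumes "0 \<le> u" "u \<le> 1" "0 \<le> w" "w \<le> 1" "b \<le> a" "c \<le> b" "d \<le> c"
  shows "(1 - u*w) * b + (u*w - u*w*w) * c + u*w*w * d \<le> (1-u) * a + (u - u*w) * b + u*w * c"
proof -
  have uw: "0 \<le> u*w" "u*w \<le> 1" "u * w \<le> u" using assms by (auto simp: mult_le_one mult_left_le)
  have "u*w*w * d \<le> u*w*w * c" using assms uw by (intro mult_left_mono) auto
  moreover have "(1-u) * b \<le> (1-u) * a" using assms by (intro mult_left_mono) auto
  ultimately show ?thesis by (simp add: algebra_simps)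
qed

lemma Kx_dec: assumes p: "p \<ge> 1" and x: "\<And>j. x (Suc j) \<le> x j"
  shows "Kx p x (Suc r) \<le> Kx p x r"
proof -
  have x1: "x r \<le> x (r - 1)" using x by (cases r) auto
  have e1: "1/p^(Suc r) = (1/p^r) * (1/p)" "1/p^(Suc (Suc r)) = (1/p^r) * (1/p) * (1/p)" by simp_all
  have "0 \<le> 1/p^r" "1/p^r \<le> 1" "0 \<le> 1/p" "1/p \<le> 1" using p by auto
  from alg2[OF this x1 x x] show ?thesis unfolding Kx_def e1 by simp
qed

lemma Sf_dom: assumes p: "p \<ge> 1" shows "(\<And>j. x (Suc j) \<le> x j) \<Longrightarrow> Sf p (Suc n) x \<le> Sf p n x"
proof (induction n arbitrary: x)
  case 0
  have "(1 - 1/p) * x 0 + 1/p * x 1 \<le> (1 - 1/p) * x 0 + 1/p * x 0"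
    using 0 p by (intro add_left_mono mult_left_mono) auto
  then show ?case using p by (simp add: Sf.simps algebra_simps)
next
  case (Suc n)
  have "Sf p (Suc (Suc n)) x = Sf p (Suc n) (Kx p x)" using p by (intro Sf_K) auto
  also have "\<dots> \<le> Sf p n (Kx p x)" by (intro Suc.IH Kx_dec[OF p, of x] Suc.prems)
  also have "\<dots> = Sf p (Suc n) x" using p by (intro Sf_K[symmetric]) auto
  finally show ?case .
qed



lemma cardG_rec:
  assumes pr: "prime p" and q: "q = p^\<mu>" and mu: "\<mu> \<ge> 1"
  shows "card (GG p q k (Suc n) False) = card (Rows p q n k) * card (GG p q k n False)"
proof -
  have "card (GG p q k (Suc n) False) = (\<Sum>r\<in>Rows p q n k. card {M \<in> GG p q k (Suc n) False. rowv 0 M (Suc n + k) = r})"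
    by (rule card_fibers[OF finite_GG]) (use rowv_Rows[of _ p q k n False] finite_Rows in auto)
  also have "\<dots> = (\<Sum>r\<in>Rows p q n k. card (GG p q k n False))"
    by (intro sum.cong refl fiberA[OF pr q mu]) auto
  finally show ?thesis by simp
qed

lemma GG00: "GG p q 0 0 b = (if b \<and> int q dvd 1 then {} else {0\<^sub>m 0 0})"
proof -
  have "M \<in> carrier_mat 0 0 \<Longrightarrow> M = 0\<^sub>m 0 0" for M :: "int mat" by (intro eq_matI) auto
  thus ?thesis unfolding GG_def by auto
qed

lemma tri_suc: "Suc n * (Suc n + 1) div 2 = n * (n + 1) div 2 + Suc n"
proof -
  have "Suc n * (Suc n + 1) = n * (n+1) + Suc n * 2" by (simp add: algebra_simps)
  thus ?thesis by simp
qed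

lemma cardG0:
  assumes pr: "prime p" and q: "q = p^\<mu>" and mu: "\<mu> \<ge> 1"
  shows "card (GG p q 0 n False) = q ^ (n * (n + 1) div 2)"
proof (induction n)
  case 0 then show ?case by (simp add: GG00)
next
  case (Suc n)
  have p0: "p > 0" using pr prime_gt_0_nat by simp
  have qQ: "q = p * p^(\<mu>-1)" unfolding q using mu by (cases \<mu>) auto
  show ?case unfolding cardG_rec[OF pr q mu] card_Rows[OF p0 qQ] Suc tri_suc
    by (simp add: power_add)
qed

lemma sym_mats_symU: "sym_mats n m = symU n {1..int m}"
  unfolding sym_mats_def symU_def by auto

lemma GG0_symU: "GG p q 0 n b = {M \<in> symU n {0..<int q}. b \<longrightarrow> \<not> int q dvd det M}"
  unfolding GG_def symU_def dm_def by auto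

lemma GGj0_symU: "GG p q j 0 b = {M \<in> symU j (Pq p q). b \<longrightarrow> \<not> int q dvd det M}"
  unfolding GG_def symU_def dm_def Pq_def by auto

lemma symU_carrier: "M \<in> symU N D \<Longrightarrow> M \<in> carrier_mat N N" unfolding symU_def by auto

lemma card_shift:
  assumes qpos: "q > 0"
  shows "card {M \<in> symU n {1..int q}. P (map_mat (\<lambda>x. x mod int q) M)} = card {M' \<in> symU n {0..<int q}. P M'}"
proof -
  have c: "card {d \<in> {1..int q}. d mod int q = e} = 1" if "e \<in> {0..<int q}" for e
  proof -
    have "{d \<in> {1..int q}. d mod int q = e} = {if e = 0 then int q else e}"
    proof (cases "e = 0")
      case True
      have "d \<in> {1..int q} \<Longrightarrow> int q dvd d \<longleftrightarrow> d = int q" for d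
        using qpos zdvd_imp_le[of "int q" d] by auto
      then show ?thesis using True qpos by auto
    next
      case False
      have "d \<in> {1..int q} \<Longrightarrow> d mod int q = e \<longleftrightarrow> d = e" for d
        using False that by (cases "d = int q") auto
      then show ?thesis using False that by auto
    qed
    thus ?thesis by simp
  qed
  have "card {M \<in> symU n {1..int q}. P (map_mat (\<lambda>x. x mod int q) M)} = 1 ^ card (UU n) * card {M' \<in> symU n {0..<int q}. P M'}"
    by (rule card_pullback) (use c qpos in auto)
  thus ?thesis by simp
qed

lemma hh_0n:
  assumes pr: "prime p" and q: "q = p^\<mu>" and mu: "\<mu> \<ge> 1"
  shows "hh p q 0 n = Pdet n p \<mu>"
proof -
  have p1: "p > 1" using pr prime_gt_1_nat by simp
  have qpos: "q > 0" using q p1 by simp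
  have qge: "q \<ge> p" unfolding q using mu p1 by (simp add: self_le_power)
  have q2: "\<not> int q dvd 1" using qge p1 zdvd_imp_le[of "int q" 1] by auto
  show ?thesis
  proof (cases "n = 0")
    case True then show ?thesis using mu q2 unfolding hh_def Pdet_def by (simp add: GG00)
  next
    case False
    have dc: "det (map_mat (\<lambda>x. x mod int q) M) mod int q = det M mod int q" if "M \<in> symU n {1..int q}" for M
      by (rule det_cong[of _ n]) (use symU_carrier[OF that] in auto)
    have "nonsing_sym_mats n q = {M \<in> symU n {1..int q}. \<not> int q dvd det (map_mat (\<lambda>x. x mod int q) M)}"
      unfolding nonsing_sym_mats_def sym_mats_symU using dc mod_dvd_iff_eq by blast
    hence c1: "card (nonsing_sym_mats n q) = card (GG p q 0 n True)"
      unfolding GG0_symU using card_shift[OF qpos, of n "\<lambda>M. \<not> int q dvd det M"] by simp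
    have c2: "card (GG p q 0 n False) = q ^ (n * (n + 1) div 2)" by (rule cardG0[OF pr q mu])
    show ?thesis unfolding hh_def Pdet_def c1[symmetric] c2 using mu False q by simp
  qed
qed

lemma cnt_mod:
  fixes b r :: int
  assumes "b > 0" "0 \<le> r" "r < b"
  shows "card {y \<in> {0..<int a * b}. y mod b = r} = a"
proof -
  have "{y \<in> {0..<int a * b}. y mod b = r} = (\<lambda>t. r + b * t) ` {0..<int a}"
  proof
    show "{y \<in> {0..<int a * b}. y mod b = r} \<subseteq> (\<lambda>t. r + b * t) ` {0..<int a}"
    proof
      fix y assume y: "y \<in> {y \<in> {0..<int a * b}. y mod b = r}"
      have ym: "y mod b = r" and yr: "0 \<le> y" "y < int a * b" using y by auto
      have e: "y = r + b * (y div b)" using mult_div_mod_eq[of b y] ym by linarith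
      have "0 \<le> y div b" using yr assms by (simp add: pos_imp_zdiv_nonneg_iff)
      moreover have "y div b < int a"
      proof (rule ccontr)
        assume "\<not> y div b < int a"
        hence "b * int a \<le> b * (y div b)" using assms by (intro mult_left_mono) auto
        moreover have "int a * b = b * int a" by simp
        ultimately show False using e yr assms by linarith
      qed
      ultimately show "y \<in> (\<lambda>t. r + b * t) ` {0..<int a}" using e by force
    qed
    show "(\<lambda>t. r + b * t) ` {0..<int a} \<subseteq> {y \<in> {0..<int a * b}. y mod b = r}"
    proof
      fix y assume "y \<in> (\<lambda>t. r + b * t) ` {0..<int a}"
      then obtain t where t: "0 \<le> t" "t < int a" "y = r + b * t" by auto
      have "t + 1 \<le> int a" using t by simp
      hence "b * (t + 1) \<le> b * int a" using assms by (intro mult_left_mono) auto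
      hence "b * t + b \<le> b * int a" by (simp add: algebra_simps)
      hence "y < int a * b" using t assms by (simp add: mult.commute)
      moreover have "0 \<le> y" using t assms by simp
      moreover have "y mod b = r" using t assms by simp
      ultimately show "y \<in> {y \<in> {0..<int a * b}. y mod b = r}" by simp
    qed
  qed
  moreover have "inj_on (\<lambda>t. r + b * t) {0..<int a}" using assms by (auto intro: inj_onI)
  ultimately show ?thesis by (simp add: card_image)
qed

lemma det_div_p:
  assumes M: "M \<in> symU j (Pq p q)"
  shows "det M = int p ^ j * det (map_mat (\<lambda>x. x div int p) M)"
proof -
  have "M = int p \<cdot>\<^sub>m map_mat (\<lambda>x. x div int p) M"
    using M unfolding symU_def Pq_def by (intro eq_matI) auto
  hence "det M = det (int p \<cdot>\<^sub>m map_mat (\<lambda>x. x div int p) M)" by simp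
  moreover have "dim_col M = j" using M unfolding symU_def by auto
  ultimately show ?thesis by simp
qed

lemma hh_j0:
  assumes pr: "prime p" and q: "q = p^\<mu>" and mu: "\<mu> \<ge> 1"
  shows "hh p q j 0 = Pdet j p (\<mu> - j)"
proof (cases "j = 0")
  case True then show ?thesis using hh_0n[OF pr q mu, of 0] by simp
next
  case j0: False
  have p1: "p > 1" using pr prime_gt_1_nat by simp
  have qpos: "q > 0" using q p1 by simp
  show ?thesis
  proof (cases "\<mu> \<le> j")
    case True
    have "GG p q j 0 True = {}"
    proof -
      have "int q dvd det M" if M: "M \<in> symU j (Pq p q)" for M
      proof -
        have "int q dvd int p ^ j" unfolding q using True by (simp add: le_imp_power_dvd)
        thus ?thesis unfolding det_div_p[OF M] by simp
      qed
      thus ?thesis unfolding GGj0_symU by auto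
    qed
    thus ?thesis using True unfolding hh_def Pdet_def by simp
  next
    case False
    define \<nu> where "\<nu> = \<mu> - j"
    define q' where "q' = p ^ \<nu>"
    define c where "c = p ^ (j - 1)"
    have nu: "\<nu> \<ge> 1" "\<mu> = j + \<nu>" using False unfolding \<nu>_def by auto
    have q'pos: "q' > 0" unfolding q'_def using p1 by simp
    have qq': "q = p^j * q'" unfolding q q'_def nu(2) by (simp add: power_add)
    have QQ: "p^(\<mu>-1) = c * q'" unfolding c_def q'_def nu(2) using j0 by (simp add: power_add[symmetric])
    define g where "g x = (let y = (x div int p) mod int q' in if y = 0 then int q' else y)" for x
    have gD: "g ` Pq p q \<subseteq> {1..int q'}"
    proof
      fix e assume "e \<in> g ` Pq p q"
      then obtain x where "e = g x" by blast
      define y where "y = (x div int p) mod int q'"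
      have b: "0 \<le> y" "y < int q'" unfolding y_def using q'pos by auto
      have "e = (if y = 0 then int q' else y)" unfolding \<open>e = g x\<close> g_def Let_def y_def ..
      thus "e \<in> {1..int q'}" using b q'pos by auto
    qed
    have gmod: "g x mod int q' = (x div int p) mod int q'" for x
      unfolding g_def Let_def by auto
    have fib: "card {d \<in> Pq p q. g d = e} = c" if e: "e \<in> {1..int q'}" for e
    proof -
      have "{d \<in> Pq p q. g d = e} = (\<lambda>y. int p * y) ` {y \<in> {0..<int c * int q'}. y mod int q' = e mod int q'}"
      proof -
        have Pq_eq: "Pq p q = (\<lambda>y. int p * y) ` {0..<int c * int q'}"
        proof -
          have "Pq p q = (\<lambda>y. int p * y) ` {0..<int (p^(\<mu>-1))}"
          proof
            show "Pq p q \<subseteq> (\<lambda>y. int p * y) ` {0..<int (p^(\<mu>-1))}"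
            proof
              fix x assume "x \<in> Pq p q"
              then obtain y where x: "x = int p * y" "0 \<le> x" "x < int q" unfolding Pq_def by (auto elim: dvdE)
              have qe: "int q = int p * int (p^(\<mu>-1))" unfolding q using mu by (cases \<mu>) auto
              have "0 \<le> y" using x p1 by (simp add: zero_le_mult_iff)
              moreover have "y < int (p^(\<mu>-1))" using x p1 qe by simp
              ultimately show "x \<in> (\<lambda>y. int p * y) ` {0..<int (p^(\<mu>-1))}" using x by auto
            qed
            show "(\<lambda>y. int p * y) ` {0..<int (p^(\<mu>-1))} \<subseteq> Pq p q"
            proof
              fix x assume "x \<in> (\<lambda>y. int p * y) ` {0..<int (p^(\<mu>-1))}"
              then obtain y where y0: "x = int p * y" "y \<in> {0..<int (p^(\<mu>-1))}" by (rule imageE)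
              hence y: "x = int p * y" "0 \<le> y" "y < int (p^(\<mu>-1))" by auto
              have qe: "int q = int p * int (p^(\<mu>-1))" unfolding q using mu by (cases \<mu>) auto
              have "int p * y < int p * int (p^(\<mu>-1))" using y p1 by simp
              thus "x \<in> Pq p q" unfolding Pq_def using y p1 qe by auto
            qed
          qed
          thus ?thesis unfolding QQ by simp
        qed
        have gp: "g (int p * y) = e \<longleftrightarrow> y mod int q' = e mod int q'" for y
        proof -
          have gy: "g (int p * y) = (if y mod int q' = 0 then int q' else y mod int q')"
            unfolding g_def Let_def using p1 by simp
          show ?thesis
          proof (cases "e = int q'")
            case True
            have "y mod int q' < int q'" using q'pos by simp
            thus ?thesis unfolding gy True by auto
          next
            case False
            hence "e mod int q' = e" using e by auto
            thus ?thesis unfolding gy using e by auto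
          qed
        qed
        have "{d \<in> (\<lambda>y. int p * y) ` {0..<int c * int q'}. g d = e} = (\<lambda>y. int p * y) ` {y \<in> {0..<int c * int q'}. g (int p * y) = e}"
          by blast
        also have "{y \<in> {0..<int c * int q'}. g (int p * y) = e} = {y \<in> {0..<int c * int q'}. y mod int q' = e mod int q'}"
          using gp by simp
        finally show ?thesis unfolding Pq_eq .
      qed
      moreover have "inj_on (\<lambda>y. int p * y) {y \<in> {0..<int c * int q'}. y mod int q' = e mod int q'}"
        using p1 by (auto intro: inj_onI)
      ultimately have "card {d \<in> Pq p q. g d = e} = card {y \<in> {0..<int c * int q'}. y mod int q' = e mod int q'}"
        by (simp add: card_image)
      also have "\<dots> = c" by (rule cnt_mod) (use q'pos in auto)
      finally show ?thesis .
    qed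
    have finPq: "finite (Pq p q)" unfolding Pq_def by (rule finite_subset[of _ "{0..<int q}"]) auto
    have detc: "int q dvd det M \<longleftrightarrow> int q' dvd det (map_mat g M)" if M: "M \<in> symU j (Pq p q)" for M
    proof -
      have "det (map_mat (\<lambda>x. x div int p) M) mod int q' = det (map_mat g M) mod int q'"
        by (rule det_cong[of _ j]) (use symU_carrier[OF M] gmod in auto)
      hence "int q' dvd det (map_mat (\<lambda>x. x div int p) M) \<longleftrightarrow> int q' dvd det (map_mat g M)"
        by (rule mod_dvd_iff_eq)
      moreover have "int q dvd det M \<longleftrightarrow> int q' dvd det (map_mat (\<lambda>x. x div int p) M)"
        unfolding det_div_p[OF M] qq' using p1 by simp
      ultimately show ?thesis by simp
    qed
    have cT: "card (GG p q j 0 True) = c ^ card (UU j) * card (nonsing_sym_mats j q')"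
    proof -
      have "GG p q j 0 True = {M \<in> symU j (Pq p q). \<not> int q' dvd det (map_mat g M)}"
        unfolding GGj0_symU using detc by auto
      moreover have "nonsing_sym_mats j q' = {M' \<in> symU j {1..int q'}. \<not> int q' dvd det M'}"
        unfolding nonsing_sym_mats_def sym_mats_symU by auto
      ultimately show ?thesis using card_pullback[OF finPq _ gD fib, of j "\<lambda>M'. \<not> int q' dvd det M'"] by simp
    qed
    have cF: "card (GG p q j 0 False) = c ^ card (UU j) * card (sym_mats j q')"
    proof -
      have "GG p q j 0 False = {M \<in> symU j (Pq p q). True}" unfolding GGj0_symU by auto
      moreover have "sym_mats j q' = {M' \<in> symU j {1..int q'}. True}" unfolding sym_mats_symU by auto
      ultimately show ?thesis using card_pullback[OF finPq _ gD fib, of j "\<lambda>_. True"] by simp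
    qed
    have cS: "card (sym_mats j q') = q' ^ (j * (j + 1) div 2)"
    proof -
      have "card (sym_mats j q') = card (GG p q' 0 j False)"
        unfolding sym_mats_symU GG0_symU using card_shift[OF q'pos, of j "\<lambda>_. True"] by simp
      also have "\<dots> = q' ^ (j * (j + 1) div 2)" by (rule cardG0[OF pr q'_def nu(1)])
      finally show ?thesis .
    qed
    have cpos: "c > 0" unfolding c_def using p1 by simp
    show ?thesis unfolding hh_def cT cF cS Pdet_def \<nu>_def[symmetric] q'_def[symmetric]
      using nu j0 cpos by simp
  qed
qed

lemma hh_Sf:
  assumes pr: "prime p" and q: "q = p^\<mu>" and mu: "\<mu> \<ge> 1"
  shows "hh p q k n = Sf (real p) n (\<lambda>j. hh p q (k+j) 0)"
proof (induction n arbitrary: k rule: less_induct)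
  case (less n)
  show ?case
  proof (cases n)
    case 0 then show ?thesis by simp
  next
    case (Suc m)
    have "hh p q k (Suc m) = (1 - 1/real p) * hh p q k m + (1/real p - 1/(real p)^(Suc m)) * hh p q k (m - 1)
      + 1/(real p)^(Suc m) * hh p q (Suc k) m" by (rule hh_rec[OF pr q mu])
    also have "hh p q k m = Sf (real p) m (\<lambda>j. hh p q (k+j) 0)" using Suc by (intro less.IH) simp
    also have "hh p q k (m-1) = Sf (real p) (m-1) (\<lambda>j. hh p q (k+j) 0)" using Suc by (intro less.IH) simp
    also have "hh p q (Suc k) m = Sf (real p) m (\<lambda>j. hh p q (Suc k+j) 0)" using Suc by (intro less.IH) simp
    finally show ?thesis unfolding Suc by (simp add: Sf.simps)
  qed
qed


lemma Pdet_nonneg: "Pdet n p \<mu> \<ge> 0"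
  unfolding Pdet_def by simp

lemma Pdet_formula: assumes "prime p" "\<mu> \<ge> 1"
  shows "Pdet n p \<mu> = Sf (real p) n (\<lambda>j. Pdet j p (\<mu> - j))"
proof -
  have q: "p^\<mu> = p^\<mu>" ..
  have "Pdet n p \<mu> = hh p (p^\<mu>) 0 n" using hh_0n[OF assms(1) q assms(2)] by simp
  also have "\<dots> = Sf (real p) n (\<lambda>j. hh p (p^\<mu>) (0+j) 0)" by (rule hh_Sf[OF assms(1) q assms(2)])
  also have "\<dots> = Sf (real p) n (\<lambda>j. Pdet j p (\<mu> - j))" using hh_j0[OF assms(1) q assms(2)] by simp
  finally show ?thesis .
qed

theorem theorem5p3:
  fixes p n \<mu> :: nat
  assumes "prime p"
  shows "Pdet (n + 1) p \<mu> \<le> Pdet n p \<mu> \<and> Pdet n p \<mu> \<le> Pdet n p (\<mu> + 1)"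
proof -
  have p1: "real p \<ge> 1" using assms prime_ge_1_nat by auto
  have "\<forall>n. Pdet (n + 1) p \<mu> \<le> Pdet n p \<mu> \<and> Pdet n p \<mu> \<le> Pdet n p (\<mu> + 1)"
  proof (induction \<mu> rule: less_induct)
    case (less \<mu>)
    show ?case
    proof (cases "\<mu> = 0")
      case True
      then show ?thesis by (simp add: Pdet_nonneg) (simp add: Pdet_def)
    next
      case False
      hence mu: "\<mu> \<ge> 1" by simp
      define z where "z = (\<lambda>j. Pdet j p (\<mu> - j))"
      define z' where "z' = (\<lambda>j. Pdet j p (\<mu> + 1 - j))"
      have dec: "z (Suc j) \<le> z j" for j
      proof (cases "j < \<mu>")
        case True
        define m where "m = \<mu> - j - 1"
        have m: "m < \<mu>" "\<mu> - Suc j = m" "\<mu> - j = m + 1" using True mu unfolding m_def by auto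
        have "Pdet (Suc j) p m \<le> Pdet j p m" using less.IH[OF m(1)] by simp
        also have "\<dots> \<le> Pdet j p (m+1)" using less.IH[OF m(1)] by simp
        finally show ?thesis unfolding z_def m by simp
      next
        case False
        then show ?thesis unfolding z_def by (simp add: Pdet_nonneg) (simp add: Pdet_def)
      qed
      have le: "z j \<le> z' j" for j
      proof (cases "j = 0")
        case True then show ?thesis unfolding z_def z'_def using mu by (simp add: Pdet_def)
      next
        case j: False
        show ?thesis
        proof (cases "j \<le> \<mu>")
          case True
          define m where "m = \<mu> - j"
          have m: "m < \<mu>" "\<mu> - j = m" "\<mu> + 1 - j = m + 1" using True j mu unfolding m_def by auto
          show ?thesis unfolding z_def z'_def m using less.IH[OF m(1)] by simp
        next
          case False
          then show ?thesis unfolding z_def z'_def by (simp add: Pdet_nonneg)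
        qed
      qed
      show ?thesis
      proof
        fix n
        have f: "Pdet k p \<mu> = Sf (real p) k z" for k unfolding z_def by (rule Pdet_formula[OF assms mu])
        have f': "Pdet k p (\<mu>+1) = Sf (real p) k z'" for k unfolding z'_def by (rule Pdet_formula[OF assms]) (use mu in simp)
        show "Pdet (n + 1) p \<mu> \<le> Pdet n p \<mu> \<and> Pdet n p \<mu> \<le> Pdet n p (\<mu> + 1)"
          unfolding f f' using Sf_dom[OF p1, of z n, OF dec] Sf_mono[OF p1, of z z' n, OF le] by simp
      qed
    qed
  qed
  then show ?thesis by blast
qed

end
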